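(* Let $F$ be a generic, supertransversal fully-connected ReLU network with input dimension $n_0$, and let $C$ be a $k$-dimensional cell of $\mathcal{C}(F)$. Then the sign sequence $s(C)$ has exactly $n_0-k$ entries equal to zero; that is, $C$ is contained in the intersection of exactly $n_0-k$ bent hyperplanes.
   Context: A ReLU network of architecture $(n_0,\dots,n_m,1)$: affine maps $A_i:\mathbb{R}^{n_{i-1}}\to\mathbb{R}^{n_i}$, $1\le i\le m+1$, $n_{m+1}=1$; $F_i=\mathrm{ReLU}\circ A_i$ ($i\le m$), $G=A_{m+1}$, $F=G\circ F_m\circ\cdots\circ F_1$, $F_{(k)}=F_k\circ\cdots\circ F_1$ ($F_{(0)}=\mathrm{id}$), $F^{(k)}=G\circ F_m\circ\cdots\circ F_k:\mathbb{R}^{n_{k-1}}\to\mathbb{R}$ ($F^{(m+1)}=G$). Node maps $F_{ij}=\pi_j\circ A_i\circ F_{(i-1)}$, $1\le i\le m+1$, $1\le j\le n_i$; $N=n_1+\dots+n_m+1$. A bent hyperplane is a set $F_{ij}^{-1}(0)$. Polyhedra are finite intersections of closed half-spaces; $C^\circ$ is the relative interior. $R^{(i)}$ is the polyhedral complex on $\mathbb{R}^{n_{i-1}}$ induced by the hyperplanes $H_{ij}=\{\pi_jA_i=0\}$, $1\le j\le n_i$ (cells: nonempty intersections of one choice among $\{\pi_jA_i\ge0\},\{\pi_jA_i\le0\},\{\pi_jA_i=0\}$ for each $j$). Canonical polyhedral complex: $\mathcal{C}(F_{(1)})=R^{(1)}$, $\mathcal{C}(F_{(k)})=\{C\cap F_{(k-1)}^{-1}(R)\neq\emptyset: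 C\in\mathcal{C}(F_{(k-1)}),R\in R^{(k)}\}$, $2\le k\le m+1$; $\mathcal{C}(F)$ is the last one. The same construction for $F^{(k)}$ gives $\mathcal{C}(F^{(k)})$ on $\mathbb{R}^{n_{k-1}}$, with $\mathcal{C}(F^{(m+1)})=R^{(m+1)}$. Sign sequence: $s_{ij}(C)=\mathrm{sgn}(F_{ij}(x))$ for $x\in C^\circ$. Generic: for every $i$, any $k$ of the hyperplanes $H_{i1},\dots,H_{in_i}$ intersect in an affine subspace of dimension $n_{i-1}-k$ (empty if $k>n_{i-1}$). A map affine on cells of a polyhedral complex $X$ is transverse on cells of $X$ to a submanifold $Z$ if its restriction to $C^\circ$ is transverse to $Z$ for every cell $C$ of $X$. Supertransversal: for every $1\le i\le m$, $F_i$ is transverse on cells of $R^{(i)}$ to the interior of every cell of $\mathcal{C}(F^{(i+1)})$. *)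

theory Defs
  imports "HOL-Analysis.Analysis" "HOL-Library.Function_Algebras"
begin

text \<open>Points of R^d are represented as functions nat => real vanishing from index d on.
  We make nat => real a real vector space (pointwise operations); its topology is the
  product topology from HOL-Analysis, which on every finite-dimensional affine subspace
  of R^d agrees with the Euclidean topology. Hence the library notions span, dim,
  affine hull and rel_interior have their usual meaning on subsets of R^d.\<close>

instantiation "fun" :: (type, real_vector) real_vector
begin
definition scaleR_fun :: "real \<Rightarrow> ('a \<Rightarrow> 'b) \<Rightarrow> 'a \<Rightarrow> 'b"
  where "scaleR_fun r f = (\<lambda>x. r *\<^sub>R f x)"
instance
  by standard (auto simp: scaleR_fun_def fun_eq_iff scaleR_add_right scaleR_add_left)
end

type_synonym vec = "nat \<Rightarrow> real"

definition Rn :: "nat \<Rightarrow> vec set" where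
  "Rn d = {x. \<forall>k\<ge>d. x k = 0}"

text \<open>Dimension of a (nonempty, convex) set: dimension of the linear space spanned by its differences
  (= dimension of its affine hull).\<close>
definition adim :: "vec set \<Rightarrow> nat" where
  "adim S = dim {x - y | x y. x \<in> S \<and> y \<in> S}"

text \<open>Parameters: widths n :: nat => nat, weights W i j k (row j, column k of A_i) and
  biases b i j, for layers 1 <= i <= m+1; indices j, k start at 0.\<close>

definition affmap :: "(nat \<Rightarrow> nat) \<Rightarrow> (nat \<Rightarrow> nat \<Rightarrow> nat \<Rightarrow> real) \<Rightarrow> (nat \<Rightarrow> nat \<Rightarrow> real)
    \<Rightarrow> nat \<Rightarrow> vec \<Rightarrow> vec" where
  "affmap n W b i x = (\<lambda>j. if j < n i then (\<Sum>k<n (i - 1). W i j k * x k) + b i j else 0)"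

definition layer :: "(nat \<Rightarrow> nat) \<Rightarrow> (nat \<Rightarrow> nat \<Rightarrow> nat \<Rightarrow> real) \<Rightarrow> (nat \<Rightarrow> nat \<Rightarrow> real)
    \<Rightarrow> nat \<Rightarrow> vec \<Rightarrow> vec" where
  "layer n W b i x = (\<lambda>j. max 0 (affmap n W b i x j))"

text \<open>layers n W b k l = F_(k+l-1) o ... o F_k  (identity for l = 0);
  so F_(k) = layers n W b 1 k.\<close>
fun layers :: "(nat \<Rightarrow> nat) \<Rightarrow> (nat \<Rightarrow> nat \<Rightarrow> nat \<Rightarrow> real) \<Rightarrow> (nat \<Rightarrow> nat \<Rightarrow> real)
    \<Rightarrow> nat \<Rightarrow> nat \<Rightarrow> vec \<Rightarrow> vec" where
  "layers n W b k 0 x = x"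
| "layers n W b k (Suc l) x = layer n W b (k + l) (layers n W b k l x)"

definition node :: "(nat \<Rightarrow> nat) \<Rightarrow> (nat \<Rightarrow> nat \<Rightarrow> nat \<Rightarrow> real) \<Rightarrow> (nat \<Rightarrow> nat \<Rightarrow> real)
    \<Rightarrow> nat \<Rightarrow> nat \<Rightarrow> vec \<Rightarrow> real" where
  "node n W b i j x = affmap n W b i (layers n W b 1 (i - 1) x) j"

text \<open>R^(i): cells of the arrangement of hyperplanes H_ij on R^(n (i-1)); sigma j = 1, -1, 0
  selects {pi_j A_i >= 0}, {pi_j A_i <= 0}, {pi_j A_i = 0} respectively.\<close>
definition hcells :: "(nat \<Rightarrow> nat) \<Rightarrow> (nat \<Rightarrow> nat \<Rightarrow> nat \<Rightarrow> real) \<Rightarrow> (nat \<Rightarrow> nat \<Rightarrow> real)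
    \<Rightarrow> nat \<Rightarrow> vec set set" where
  "hcells n W b i = {R. R \<noteq> {} \<and> (\<exists>\<sigma>::nat \<Rightarrow> int. (\<forall>j. \<sigma> j \<in> {-1, 0, 1}) \<and>
      R = {x \<in> Rn (n (i - 1)). \<forall>j < n i.
             (\<sigma> j = 1 \<longrightarrow> 0 \<le> affmap n W b i x j) \<and>
             (\<sigma> j = -1 \<longrightarrow> affmap n W b i x j \<le> 0) \<and>
             (\<sigma> j = 0 \<longrightarrow> affmap n W b i x j = 0)})}"

text \<open>canon n W b k l: canonical polyhedral complex (on R^(n (k-1))) of the network made of the
  l consecutive layers k, ..., k+l-1. Thus C(F_(k)) = canon n W b 1 k, C(F) = canon n W b 1 (m+1),
  and C(F^(k)) = canon n W b k (m+2-k).\<close>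
fun canon :: "(nat \<Rightarrow> nat) \<Rightarrow> (nat \<Rightarrow> nat \<Rightarrow> nat \<Rightarrow> real) \<Rightarrow> (nat \<Rightarrow> nat \<Rightarrow> real)
    \<Rightarrow> nat \<Rightarrow> nat \<Rightarrow> vec set set" where
  "canon n W b k 0 = {Rn (n (k - 1))}"
| "canon n W b k (Suc l) =
     {C \<inter> (layers n W b k l -` R) | C R.
        C \<in> canon n W b k l \<and> R \<in> hcells n W b (k + l) \<and> C \<inter> (layers n W b k l -` R) \<noteq> {}}"

definition generic :: "(nat \<Rightarrow> nat) \<Rightarrow> (nat \<Rightarrow> nat \<Rightarrow> nat \<Rightarrow> real) \<Rightarrow> (nat \<Rightarrow> nat \<Rightarrow> real)
    \<Rightarrow> nat \<Rightarrow> bool" where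
  "generic n W b m \<longleftrightarrow> (\<forall>i \<in> {1..Suc m}. \<forall>S \<subseteq> {..<n i}.
     (let X = {x \<in> Rn (n (i - 1)). \<forall>j \<in> S. affmap n W b i x j = 0} in
       (card S \<le> n (i - 1) \<longrightarrow> X \<noteq> {} \<and> adim X = n (i - 1) - card S) \<and>
       (n (i - 1) < card S \<longrightarrow> X = {})))"

text \<open>Transversality of a map g that is affine on the cell C to the interior of the cell D in R^d:
  at every x in the relative interior of C with g x in the relative interior of D, the image
  of the differential of g restricted to C (i.e. span of g p - g q, p q in C) together with the
  tangent space of D (span of u - v, u v in D) spans R^d.\<close>
definition transverse_on_cell :: "(vec \<Rightarrow> vec) \<Rightarrow> vec set \<Rightarrow> vec set \<Rightarrow> nat \<Rightarrow> bool" where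
  "transverse_on_cell g C D d \<longleftrightarrow>
     (\<forall>x \<in> rel_interior C. g x \<in> rel_interior D \<longrightarrow>
        span ({g p - g q | p q. p \<in> C \<and> q \<in> C} \<union> {u - v | u v. u \<in> D \<and> v \<in> D}) = Rn d)"

definition supertransversal :: "(nat \<Rightarrow> nat) \<Rightarrow> (nat \<Rightarrow> nat \<Rightarrow> nat \<Rightarrow> real) \<Rightarrow> (nat \<Rightarrow> nat \<Rightarrow> real)
    \<Rightarrow> nat \<Rightarrow> bool" where
  "supertransversal n W b m \<longleftrightarrow> (\<forall>i \<in> {1..m}. \<forall>C \<in> hcells n W b i.
     \<forall>D \<in> canon n W b (Suc i) (Suc m - i). transverse_on_cell (layer n W b i) C D (n i))"

definition sign_seq :: "(nat \<Rightarrow> nat) \<Rightarrow> (nat \<Rightarrow> nat \<Rightarrow> nat \<Rightarrow> real) \<Rightarrow> (nat \<Rightarrow> nat \<Rightarrow> real)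
    \<Rightarrow> vec set \<Rightarrow> nat \<Rightarrow> nat \<Rightarrow> real" where
  "sign_seq n W b C i j = sgn (node n W b i j (SOME x. x \<in> rel_interior C))"

end

theory Submission
  imports Defs
begin

lemma scaleR_apply_vec[simp]: "(r *\<^sub>R (f::vec)) x = r * f x"
  by (simp add: scaleR_fun_def)

lemma sum_apply_vec[simp]: "(sum (f :: 'a \<Rightarrow> vec) A) x = (\<Sum>a\<in>A. f a x)"
  by (induction A rule: infinite_finite_induct) auto

lemma Rn_iff: "x \<in> Rn d \<longleftrightarrow> (\<forall>k\<ge>d. x k = 0)"
  by (simp add: Rn_def)

lemma Rn_subspace: "subspace (Rn d)"
  unfolding subspace_def Rn_def by auto

lemma Rn_add[intro]: "x \<in> Rn d \<Longrightarrow> y \<in> Rn d \<Longrightarrow> x + y \<in> Rn d"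
  and Rn_diff[intro]: "x \<in> Rn d \<Longrightarrow> y \<in> Rn d \<Longrightarrow> x - y \<in> Rn d"
  and Rn_scale[intro]: "x \<in> Rn d \<Longrightarrow> c *\<^sub>R x \<in> Rn d"
  and Rn_zero[intro]: "0 \<in> Rn d"
  by (auto simp: Rn_def)

lemma Rn_sum[intro]: "(\<And>a. a \<in> A \<Longrightarrow> f a \<in> Rn d) \<Longrightarrow> sum f A \<in> Rn d"
  by (auto simp: Rn_def)

lemma span_Rn: "S \<subseteq> Rn d \<Longrightarrow> span S \<subseteq> Rn d"
  using Rn_subspace span_minimal by blast

definition dotp :: "nat \<Rightarrow> vec \<Rightarrow> vec \<Rightarrow> real" where
  "dotp d g v = (\<Sum>t<d. g t * v t)"

lemma dotp_add_right: "dotp d g (v + w) = dotp d g v + dotp d g w"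
  and dotp_diff_right: "dotp d g (v - w) = dotp d g v - dotp d g w"
  and dotp_scale_right: "dotp d g (c *\<^sub>R v) = c * dotp d g v"
  and dotp_add_left: "dotp d (v + w) g = dotp d v g + dotp d w g"
  and dotp_diff_left: "dotp d (v - w) g = dotp d v g - dotp d w g"
  and dotp_scale_left: "dotp d (c *\<^sub>R v) g = c * dotp d v g"
  and dotp_zero_left: "dotp d 0 g = 0"
  and dotp_zero_right: "dotp d g 0 = 0"
  by (auto simp: dotp_def algebra_simps sum.distrib sum_subtractf sum_distrib_left)

lemma dotp_sum_left: "dotp d (sum f A) g = (\<Sum>a\<in>A. dotp d (f a) g)"
  unfolding dotp_def by (simp add: sum_distrib_right sum.swap[of _ A])

lemma dotp_sum_right: "dotp d g (sum f A) = (\<Sum>a\<in>A. dotp d g (f a))"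
  unfolding dotp_def by (simp add: sum_distrib_left sum.swap[of _ A])

lemma dotp_comm: "dotp d g v = dotp d v g"
  by (simp add: dotp_def mult.commute)

lemma dotp_self_zero: assumes "v \<in> Rn d" "dotp d v v = 0" shows "v = 0"
proof
  fix t
  have "\<forall>t\<in>{..<d}. v t * v t = 0"
    using assms(2) unfolding dotp_def
    by (subst sum_nonneg_eq_0_iff[symmetric]) auto
  then show "v t = 0 t" using assms(1) by (cases "t < d") (auto simp: Rn_def)
qed

lemma span_orth:
  assumes "\<forall>g\<in>G. dotp d g v = 0" "w \<in> span G"
  shows "dotp d w v = 0"
proof -
  have "subspace {w. dotp d w v = 0}"
    unfolding subspace_def by (auto simp: dotp_add_left dotp_scale_left dotp_zero_left)
  then show ?thesis using assms span_minimal[of G "{w. dotp d w v = 0}"] by auto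
qed

lemma projection_exists:
  assumes "finite G" "G \<subseteq> Rn d"
  shows "w \<in> Rn d \<Longrightarrow> \<exists>u\<in>span G. \<forall>g\<in>G. dotp d g (w - u) = 0"
  using assms
proof (induction G arbitrary: w rule: finite_induct)
  case empty
  then show ?case by (auto intro: span_zero)
next
  case (insert g G)
  obtain uw where uw: "uw \<in> span G" "\<forall>h\<in>G. dotp d h (w - uw) = 0"
    using insert.IH[of w] insert.prems by blast
  have "g \<in> Rn d" using insert by auto
  obtain ug where ug: "ug \<in> span G" "\<forall>h\<in>G. dotp d h (g - ug) = 0"
    using insert.IH[of g] insert.prems \<open>g \<in> Rn d\<close> by blast
  define h where "h = g - ug"
  have orthh: "\<forall>x\<in>span G. dotp d x h = 0"
    using span_orth[of G d h] ug(2) h_def by auto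
  have orthw: "\<forall>x\<in>span G. dotp d x (w - uw) = 0"
    using span_orth[of G d "w - uw"] uw(2) by auto
  have spanG: "span G \<subseteq> span (insert g G)" by (simp add: span_mono subset_insertI)
  show ?case
  proof (cases "dotp d h h = 0")
    case True
    have "h \<in> Rn d" unfolding h_def
      using \<open>g \<in> Rn d\<close> ug(1) span_Rn[of G d] insert by auto
    then have "h = 0" using True dotp_self_zero by auto
    then have "g = ug" by (simp add: h_def)
    have "dotp d g (w - uw) = 0" using orthw \<open>g = ug\<close> ug(1) by blast
    then have "\<forall>x\<in>insert g G. dotp d x (w - uw) = 0" using uw(2) by blast
    moreover have "uw \<in> span (insert g G)" using uw(1) spanG by blast
    ultimately show ?thesis by blast
  next
    case False
    define c where "c = dotp d h (w - uw) / dotp d h h"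
    define u where "u = uw + c *\<^sub>R h"
    have "u \<in> span (insert g G)"
      unfolding u_def h_def
      using uw(1) ug(1) spanG
      by (intro span_add span_scale span_diff) (auto intro: span_base)
    moreover have "\<forall>x\<in>insert g G. dotp d x (w - u) = 0"
    proof
      fix x assume x: "x \<in> insert g G"
      have e: "w - u = (w - uw) - c *\<^sub>R h" by (simp add: u_def)
      show "dotp d x (w - u) = 0"
      proof (cases "x = g")
        case True
        have g_eq: "g = h + ug" by (simp add: h_def)
        have "dotp d g (w - u) = dotp d h (w - uw) - c * dotp d h h
              + (dotp d ug (w - uw) - c * dotp d ug h)"
          unfolding e g_eq by (simp add: dotp_add_left dotp_diff_right dotp_add_right dotp_scale_right algebra_simps)
        also have "\<dots> = 0" using False orthh orthw ug(1) by (simp add: c_def)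
        finally show ?thesis using True by simp
      next
        case False
        then have "x \<in> G" using x by auto
        then have "x \<in> span G" by (rule span_base)
        then show ?thesis unfolding e
          using orthh orthw by (simp add: dotp_diff_right dotp_scale_right)
      qed
    qed
    ultimately show ?thesis by blast
  qed
qed



definition evec :: "nat \<Rightarrow> vec" where "evec k = (\<lambda>t. if t = k then 1 else 0)"

lemma dim_Rn: "dim (Rn d) = d"
proof -
  define E where "E = evec ` {..<d}"
  have inj: "inj_on evec {..<d}"
    by (auto simp: inj_on_def evec_def fun_eq_iff split: if_splits)
  have cardE: "card E = d" unfolding E_def using card_image[OF inj] by simp
  have fin: "finite E" unfolding E_def by simp
  have ind: "independent E"
  proof (rule independent_if_scalars_zero[OF fin])
    fix f x assume s: "(\<Sum>x\<in>E. f x *\<^sub>R x) = 0" and x: "x \<in> E"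
    then obtain k where k: "k < d" "x = evec k" unfolding E_def by auto
    have "(\<Sum>x\<in>E. f x *\<^sub>R x) k = (\<Sum>j<d. f (evec j) * evec j k)"
      unfolding E_def by (simp add: sum.reindex[OF inj])
    also have "\<dots> = (\<Sum>j\<in>{k}. f (evec j) * evec j k)"
      by (rule sum.mono_neutral_right) (auto simp: evec_def k)
    also have "\<dots> = f (evec k)" by (simp add: evec_def)
    finally show "f x = 0" using s k by simp
  qed
  have sub: "E \<subseteq> Rn d" unfolding E_def by (auto simp: Rn_def evec_def)
  have sp: "Rn d \<subseteq> span E"
  proof
    fix w assume w: "w \<in> Rn d"
    have "w = (\<Sum>k<d. w k *\<^sub>R evec k)"
    proof
      fix t
      show "w t = (\<Sum>k<d. w k *\<^sub>R evec k) t"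
      proof (cases "t < d")
        case True
        have "(\<Sum>k<d. w k *\<^sub>R evec k) t = (\<Sum>k<d. w k * evec k t)" by simp
        also have "\<dots> = (\<Sum>k\<in>{t}. w k * evec k t)"
          by (rule sum.mono_neutral_right) (auto simp: evec_def True)
        finally have "(\<Sum>k<d. w k *\<^sub>R evec k) t = (\<Sum>k\<in>{t}. w k * evec k t)" .
        then show ?thesis by (simp add: evec_def)
      next
        case False
        then show ?thesis using w by (simp add: Rn_def evec_def)
      qed
    qed
    also have "\<dots> \<in> span E"
      by (intro span_sum span_scale span_base) (auto simp: E_def)
    finally show "w \<in> span E" .
  qed
  show ?thesis using basis_card_eq_dim[OF sub sp ind] cardE by simp
qed

lemma Rn_fin_span: "\<exists>E. finite E \<and> Rn d \<subseteq> span E"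
proof -
  have "Rn d \<subseteq> span (evec ` {..<d})"
  proof
    fix w assume w: "w \<in> Rn d"
    have "w = (\<Sum>k<d. w k *\<^sub>R evec k)"
    proof
      fix t
      show "w t = (\<Sum>k<d. w k *\<^sub>R evec k) t"
      proof (cases "t < d")
        case True
        have "(\<Sum>k<d. w k *\<^sub>R evec k) t = (\<Sum>k<d. w k * evec k t)" by simp
        also have "\<dots> = (\<Sum>k\<in>{t}. w k * evec k t)"
          by (rule sum.mono_neutral_right) (auto simp: evec_def True)
        finally show ?thesis by (simp add: evec_def)
      next
        case False
        then show ?thesis using w by (simp add: Rn_def evec_def)
      qed
    qed
    also have "\<dots> \<in> span (evec ` {..<d})"
      by (intro span_sum span_scale span_base) auto
    finally show "w \<in> span (evec ` {..<d})" .
  qed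
  then show ?thesis by blast
qed

lemma indep_Rn_finite: "B \<subseteq> Rn d \<Longrightarrow> independent B \<Longrightarrow> finite B"
  using Rn_fin_span[of d] independent_span_bound by blast

lemma basis_Rn_subspace:
  assumes "subspace L" "L \<subseteq> Rn d"
  obtains B where "finite B" "B \<subseteq> L" "independent B" "span B = L" "card B = dim L"
proof -
  obtain B where B: "B \<subseteq> L" "independent B" "L \<subseteq> span B" "card B = dim L"
    using basis_exists by blast
  have "finite B" using indep_Rn_finite B assms by blast
  moreover have "span B = L" using span_subspace B assms by blast
  ultimately show ?thesis using that B by blast
qed

lemma orth_self_zero:
  assumes "a \<in> span G" "\<forall>g\<in>G. dotp d g a = 0" "a \<in> Rn d"
  shows "a = 0"
  using span_orth[OF assms(2) assms(1)] dotp_self_zero assms(3) by blast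

lemma kernel_dim:
  assumes fin: "finite G" and GR: "G \<subseteq> Rn d"
  shows "dim {v \<in> Rn d. \<forall>g\<in>G. dotp d g v = 0} + dim G = d"
proof -
  define L where "L = {v \<in> Rn d. \<forall>g\<in>G. dotp d g v = 0}"
  have subL: "subspace L"
    unfolding L_def subspace_def
    by (auto simp: dotp_add_right dotp_scale_right dotp_zero_right)
  obtain BL where BL: "finite BL" "BL \<subseteq> L" "independent BL" "span BL = L" "card BL = dim L"
    using basis_Rn_subspace[OF subL] unfolding L_def by blast
  obtain BU where BU: "finite BU" "BU \<subseteq> span G" "independent BU" "span BU = span G"
    "card BU = dim (span G)"
    using basis_Rn_subspace[of "span G" d] span_Rn[OF GR] by (metis subspace_span dim_span)
  have LU0: "\<And>a. a \<in> L \<Longrightarrow> a \<in> span G \<Longrightarrow> a = 0"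
    using orth_self_zero unfolding L_def by blast
  have disj: "BL \<inter> BU = {}"
  proof (rule ccontr)
    assume "BL \<inter> BU \<noteq> {}"
    then obtain x where "x \<in> BL" "x \<in> BU" by auto
    then have "x = 0" using LU0 BL(2) BU(2) by auto
    then show False using \<open>x \<in> BL\<close> BL(3) dependent_zero by blast
  qed
  define B where "B = BL \<union> BU"
  have finB: "finite B" unfolding B_def using BL BU by auto
  have indB: "independent B"
  proof (rule independent_if_scalars_zero[OF finB])
    fix f x assume s: "(\<Sum>x\<in>B. f x *\<^sub>R x) = 0" and x: "x \<in> B"
    define a where "a = (\<Sum>x\<in>BL. f x *\<^sub>R x)"
    define c where "c = (\<Sum>x\<in>BU. f x *\<^sub>R x)"
    have "a + c = 0" using s unfolding a_def c_def B_def
      by (simp add: sum.union_disjoint[OF BL(1) BU(1) disj])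
    then have ac: "a = - c" by (simp add: eq_neg_iff_add_eq_0)
    have "a \<in> span BL" unfolding a_def
      by (metis (no_types, lifting) span_base span_scale span_sum)
    then have aL: "a \<in> L" using BL(4) by simp
    have "c \<in> span G" unfolding c_def using BU(4)
      by (metis (no_types, lifting) span_base span_scale span_sum)
    then have "a \<in> span G" using ac span_neg by auto
    then have a0: "a = 0" using LU0 aL by blast
    then have c0: "c = 0" using ac by simp
    show "f x = 0"
    proof (cases "x \<in> BL")
      case True
      then show ?thesis using BL(3) a0 dependent_finite[OF BL(1)] unfolding a_def by blast
    next
      case False
      then have "x \<in> BU" using x B_def by auto
      then show ?thesis using BU(3) c0 dependent_finite[OF BU(1)] unfolding c_def by blast
    qed
  qed
  have spanG_R: "span G \<subseteq> Rn d" using span_Rn[OF GR] .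
  have BR: "B \<subseteq> Rn d" unfolding B_def using BL(2) BU(2) spanG_R by (auto simp: L_def)
  have sp: "Rn d \<subseteq> span B"
  proof
    fix w assume w: "w \<in> Rn d"
    obtain u where u: "u \<in> span G" "\<forall>g\<in>G. dotp d g (w - u) = 0"
      using projection_exists[OF fin GR w] by blast
    have "w - u \<in> L" unfolding L_def using u w spanG_R by auto
    then have "w - u \<in> span B" using BL(4) span_mono[of BL B] unfolding B_def by auto
    moreover have "u \<in> span B" using u(1) BU(4) span_mono[of BU B] unfolding B_def by auto
    ultimately have "(w - u) + u \<in> span B" by (rule span_add)
    then show "w \<in> span B" by simp
  qed
  have "card B = d" using basis_card_eq_dim[OF BR sp indB] dim_Rn by simp
  moreover have "card B = dim L + dim G"
    unfolding B_def using card_Un_disjoint[OF BL(1) BU(1) disj] BL(5) BU(5) by simp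
  ultimately show ?thesis unfolding L_def by simp
qed

definition findep :: "'a set \<Rightarrow> ('a \<Rightarrow> vec) \<Rightarrow> bool" where
  "findep Z g \<longleftrightarrow> (\<forall>c. (\<Sum>z\<in>Z. c z *\<^sub>R g z) = 0 \<longrightarrow> (\<forall>z\<in>Z. c z = 0))"

lemma findep_inj: assumes "finite Z" "findep Z g" shows "inj_on g Z"
proof (rule inj_onI, rule ccontr)
  fix x y assume xy: "x \<in> Z" "y \<in> Z" "g x = g y" "x \<noteq> y"
  define c where "c z = (if z = x then 1 else if z = y then -1 else (0::real))" for z
  have "(\<Sum>z\<in>Z. c z *\<^sub>R g z) = (\<Sum>z\<in>{x,y}. c z *\<^sub>R g z)"
    by (rule sum.mono_neutral_right) (auto simp: assms xy c_def)
  also have "\<dots> = 0" using xy by (simp add: c_def)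
  finally have "c x = 0" using assms(2) xy unfolding findep_def by blast
  then show False by (simp add: c_def)
qed

lemma findep_indep: assumes "finite Z" "findep Z g" shows "independent (g ` Z)"
proof (rule independent_if_scalars_zero)
  show "finite (g ` Z)" using assms by simp
  fix f x assume s: "(\<Sum>x\<in>g ` Z. f x *\<^sub>R x) = 0" and x: "x \<in> g ` Z"
  have "(\<Sum>z\<in>Z. f (g z) *\<^sub>R g z) = 0"
    using s by (simp add: sum.reindex[OF findep_inj[OF assms]])
  then show "f x = 0" using assms(2) x unfolding findep_def by auto
qed

lemma findep_dim: assumes "finite Z" "findep Z g" shows "dim (g ` Z) = card Z"
  using dim_eq_card_independent[OF findep_indep[OF assms]] card_image[OF findep_inj[OF assms]]
  by simp

lemma kernel_dim_fam:
  assumes "finite Z" "findep Z g" "\<forall>z\<in>Z. g z \<in> Rn d"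
  shows "dim {v \<in> Rn d. \<forall>z\<in>Z. dotp d (g z) v = 0} + card Z = d"
proof -
  have "dim {v \<in> Rn d. \<forall>h\<in>g ` Z. dotp d h v = 0} + dim (g ` Z) = d"
    by (rule kernel_dim) (use assms in auto)
  then show ?thesis using findep_dim[OF assms(1,2)] by simp
qed



locale net =
  fixes n :: "nat \<Rightarrow> nat" and W :: "nat \<Rightarrow> nat \<Rightarrow> nat \<Rightarrow> real" and b :: "nat \<Rightarrow> nat \<Rightarrow> real"
begin

definition nodeK :: "nat \<Rightarrow> nat \<Rightarrow> nat \<Rightarrow> vec \<Rightarrow> real" where
  "nodeK k i j y = affmap n W b i (layers n W b k (i - k) y) j"

definition mlayer :: "(nat \<Rightarrow> nat \<Rightarrow> bool) \<Rightarrow> nat \<Rightarrow> vec \<Rightarrow> vec" where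
  "mlayer \<mu> i x = (\<lambda>j. if \<mu> i j then affmap n W b i x j else 0)"

fun mlayers :: "(nat \<Rightarrow> nat \<Rightarrow> bool) \<Rightarrow> nat \<Rightarrow> nat \<Rightarrow> vec \<Rightarrow> vec" where
  "mlayers \<mu> k 0 x = x"
| "mlayers \<mu> k (Suc l) x = mlayer \<mu> (k + l) (mlayers \<mu> k l x)"

definition mnode :: "(nat \<Rightarrow> nat \<Rightarrow> bool) \<Rightarrow> nat \<Rightarrow> nat \<Rightarrow> nat \<Rightarrow> vec \<Rightarrow> real" where
  "mnode \<mu> k i j y = affmap n W b i (mlayers \<mu> k (i - k) y) j"

definition row :: "nat \<Rightarrow> nat \<Rightarrow> vec" where
  "row i j = (\<lambda>t. if t < n (i - 1) then W i j t else 0)"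

definition JT :: "(nat \<Rightarrow> nat \<Rightarrow> bool) \<Rightarrow> nat \<Rightarrow> vec \<Rightarrow> vec" where
  "JT \<mu> k u = (\<lambda>t. if t < n (k - 1) then (\<Sum>s<n k. if \<mu> k s then u s * W k s t else 0) else 0)"

fun gradL :: "(nat \<Rightarrow> nat \<Rightarrow> bool) \<Rightarrow> nat \<Rightarrow> nat \<Rightarrow> nat \<Rightarrow> vec" where
  "gradL \<mu> k 0 j = row k j"
| "gradL \<mu> k (Suc l) j = JT \<mu> k (gradL \<mu> (Suc k) l j)"

lemma affmap_Rn: "affmap n W b i x \<in> Rn (n i)"
  by (simp add: affmap_def Rn_def)

lemma affmap_out: "\<not> j < n i \<Longrightarrow> affmap n W b i x j = 0"
  by (simp add: affmap_def)

lemma layer_Rn: "layer n W b i x \<in> Rn (n i)"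
  by (simp add: layer_def Rn_def affmap_def)

lemma layers_Rn: "x \<in> Rn (n (k - 1)) \<Longrightarrow> layers n W b k l x \<in> Rn (n (k + l - 1))"
  by (cases l) (auto simp: layer_Rn)

lemma layers_peel: "layers n W b k (Suc l) x = layers n W b (Suc k) l (layer n W b k x)"
  by (induction l) auto

lemma mlayers_peel: "mlayers \<mu> k (Suc l) x = mlayers \<mu> (Suc k) l (mlayer \<mu> k x)"
  by (induction l) auto

lemma nodeK_peel: "k < i \<Longrightarrow> nodeK k i j y = nodeK (Suc k) i j (layer n W b k y)"
  unfolding nodeK_def by (metis Suc_diff_Suc layers_peel)

lemma nodeK_self: "nodeK k k j y = affmap n W b k y j"
  by (simp add: nodeK_def)

lemma node_nodeK: "node n W b i j x = nodeK 1 i j x"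
  by (simp add: node_def nodeK_def)

lemma affmap_diff: "j < n i \<Longrightarrow>
  affmap n W b i x j - affmap n W b i y j = dotp (n (i - 1)) (row i j) (x - y)"
  by (simp add: affmap_def dotp_def row_def algebra_simps sum_subtractf)

lemma affmap_add: "j < n i \<Longrightarrow>
  affmap n W b i (x + v) j = affmap n W b i x j + dotp (n (i - 1)) (row i j) v"
  using affmap_diff[of j i "x + v" x] by simp

lemma mlayer_dotp:
  "dotp (n k) u (mlayer \<mu> k p - mlayer \<mu> k q) = dotp (n (k - 1)) (JT \<mu> k u) (p - q)"
proof -
  have "dotp (n k) u (mlayer \<mu> k p - mlayer \<mu> k q)
      = (\<Sum>s<n k. \<Sum>t<n (k - 1). if \<mu> k s then u s * W k s t * (p t - q t) else 0)"
    unfolding dotp_def mlayer_def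
    by (intro sum.cong refl) (auto simp: affmap_def sum_distrib_left algebra_simps sum_subtractf)
  also have "\<dots> = (\<Sum>t<n (k - 1). \<Sum>s<n k. if \<mu> k s then u s * W k s t * (p t - q t) else 0)"
    by (rule sum.swap)
  also have "\<dots> = dotp (n (k - 1)) (JT \<mu> k u) (p - q)"
    unfolding dotp_def JT_def
    by (intro sum.cong refl) (auto simp: sum_distrib_right intro!: sum.cong)
  finally show ?thesis .
qed

lemma mnode_diff: "j < n (k + l) \<Longrightarrow>
  mnode \<mu> k (k + l) j z - mnode \<mu> k (k + l) j y = dotp (n (k - 1)) (gradL \<mu> k l j) (z - y)"
proof (induction l arbitrary: k y z)
  case 0
  have "\<And>x. mnode \<mu> k (k + 0) j x = affmap n W b k x j" by (simp add: mnode_def)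
  then show ?case using affmap_diff[of j k z y] 0 by (simp add: fun_diff_def)
next
  case (Suc l)
  have e: "\<And>x. mnode \<mu> k (k + Suc l) j x = mnode \<mu> (Suc k) (Suc k + l) j (mlayer \<mu> k x)"
  proof -
    fix x
    have e1: "k + Suc l - k = Suc l" "Suc k + l - Suc k = l" "Suc k + l = k + Suc l" by simp_all
    show "mnode \<mu> k (k + Suc l) j x = mnode \<mu> (Suc k) (Suc k + l) j (mlayer \<mu> k x)"
      unfolding mnode_def e1(1) mlayers_peel by simp
  qed
  have "j < n (Suc k + l)" using Suc.prems by simp
  then have IH': "mnode \<mu> (Suc k) (Suc k + l) j (mlayer \<mu> k z) - mnode \<mu> (Suc k) (Suc k + l) j (mlayer \<mu> k y)
     = dotp (n k) (gradL \<mu> (Suc k) l j) (mlayer \<mu> k z - mlayer \<mu> k y)"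
    using Suc.IH[of "Suc k" "mlayer \<mu> k z" "mlayer \<mu> k y"] by (simp add: fun_diff_def)
  have "mnode \<mu> k (k + Suc l) j z - mnode \<mu> k (k + Suc l) j y
     = dotp (n (k - 1)) (gradL \<mu> k (Suc l) j) (z - y)"
    unfolding e IH' mlayer_dotp by simp
  then show ?case by (simp add: fun_diff_def)
qed

lemma row_Rn: "row i j \<in> Rn (n (i - 1))"
  by (simp add: row_def Rn_def)

lemma JT_Rn: "JT \<mu> k u \<in> Rn (n (k - 1))"
  by (simp add: JT_def Rn_def)

lemma gradL_Rn: "gradL \<mu> k l j \<in> Rn (n (k - 1))"
  by (cases l) (simp_all only: gradL.simps row_Rn JT_Rn)

lemma gradL_cong: "(\<forall>i\<ge>k. \<mu> i = \<mu>' i) \<Longrightarrow> gradL \<mu> k l j = gradL \<mu>' k l j"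
proof (induction l arbitrary: k)
  case 0 then show ?case by simp
next
  case (Suc l)
  then have "gradL \<mu> (Suc k) l j = gradL \<mu>' (Suc k) l j" by auto
  moreover have "\<mu> k = \<mu>' k" using Suc.prems by auto
  moreover have "JT \<mu> k = JT \<mu>' k" unfolding JT_def using \<open>\<mu> k = \<mu>' k\<close> by (simp add: fun_eq_iff)
  ultimately show ?case by simp
qed

lemma JT_linear: "linear (JT \<mu> k)"
proof (rule linearI)
  fix u v :: vec
  show "JT \<mu> k (u + v) = JT \<mu> k u + JT \<mu> k v"
  proof
    fix t
    have "(\<Sum>s<n k. if \<mu> k s then (u + v) s * W k s t else 0)
      = (\<Sum>s<n k. (if \<mu> k s then u s * W k s t else 0) + (if \<mu> k s then v s * W k s t else 0))"
      by (rule sum.cong) (auto simp: algebra_simps)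
    then show "JT \<mu> k (u + v) t = (JT \<mu> k u + JT \<mu> k v) t"
      by (simp add: JT_def sum.distrib)
  qed
next
  fix r and u :: vec
  show "JT \<mu> k (r *\<^sub>R u) = r *\<^sub>R JT \<mu> k u"
  proof
    fix t
    have "(\<Sum>s<n k. if \<mu> k s then (r *\<^sub>R u) s * W k s t else 0)
      = (\<Sum>s<n k. r * (if \<mu> k s then u s * W k s t else 0))"
      by (rule sum.cong) (auto simp: algebra_simps)
    then show "JT \<mu> k (r *\<^sub>R u) t = (r *\<^sub>R JT \<mu> k u) t"
      by (simp add: JT_def sum_distrib_left)
  qed
qed

lemma layers_eq_mlayers:
  assumes "\<forall>i'. k \<le> i' \<longrightarrow> i' < k + l \<longrightarrow> (\<forall>j<n i'. (\<mu> i' j \<longrightarrow> 0 \<le> nodeK k i' j z)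
            \<and> (\<not> \<mu> i' j \<longrightarrow> nodeK k i' j z \<le> 0))"
  shows "layers n W b k l z = mlayers \<mu> k l z"
  using assms
proof (induction l)
  case 0 then show ?case by simp
next
  case (Suc l)
  then have IH: "layers n W b k l z = mlayers \<mu> k l z" by auto
  have c: "\<forall>j<n (k + l). (\<mu> (k + l) j \<longrightarrow> 0 \<le> nodeK k (k + l) j z)
            \<and> (\<not> \<mu> (k + l) j \<longrightarrow> nodeK k (k + l) j z \<le> 0)"
    using Suc.prems by auto
  show ?case
  proof
    fix s
    show "layers n W b k (Suc l) z s = mlayers \<mu> k (Suc l) z s"
    proof (cases "s < n (k + l)")
      case True
      then show ?thesis using c[rule_format, OF True]
        by (auto simp: layer_def mlayer_def nodeK_def IH[symmetric])
    next
      case False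
      then show ?thesis by (simp add: layer_def mlayer_def affmap_out)
    qed
  qed
qed

lemma nodeK_eq_mnode:
  assumes "k \<le> i"
    and "\<forall>i'. k \<le> i' \<longrightarrow> i' < i \<longrightarrow> (\<forall>j<n i'. (\<mu> i' j \<longrightarrow> 0 \<le> nodeK k i' j z)
            \<and> (\<not> \<mu> i' j \<longrightarrow> nodeK k i' j z \<le> 0))"
  shows "nodeK k i j z = mnode \<mu> k i j z"
proof -
  have "layers n W b k (i - k) z = mlayers \<mu> k (i - k) z"
    by (rule layers_eq_mlayers) (use assms in auto)
  then show ?thesis by (simp add: nodeK_def mnode_def)
qed

lemma layer_induction:
  assumes good: "\<forall>i j. k \<le> i \<longrightarrow> i \<le> e \<longrightarrow> j < n i \<longrightarrow> Good i j (mnode \<mu> k i j z)"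
    and gs: "\<forall>i j a. Good i j a \<longrightarrow> (\<mu> i j \<longrightarrow> 0 \<le> a) \<and> (\<not> \<mu> i j \<longrightarrow> a \<le> 0)"
  shows "k \<le> i \<Longrightarrow> i \<le> e \<Longrightarrow> nodeK k i j z = mnode \<mu> k i j z"
proof (induction i arbitrary: j rule: less_induct)
  case (less i)
  show ?case
  proof (rule nodeK_eq_mnode[OF less.prems(1)], intro allI impI)
    fix i' j' assume i': "k \<le> i'" "i' < i" and j': "j' < n i'"
    have "nodeK k i' j' z = mnode \<mu> k i' j' z" using less.IH i' less.prems by auto
    moreover have "Good i' j' (mnode \<mu> k i' j' z)" using good i' j' less.prems by auto
    ultimately show "(\<mu> i' j' \<longrightarrow> 0 \<le> nodeK k i' j' z) \<and> (\<not> \<mu> i' j' \<longrightarrow> nodeK k i' j' z \<le> 0)"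
      using gs by metis
  qed
qed

end


definition compat :: "real \<Rightarrow> real \<Rightarrow> bool" where
  "compat a c \<longleftrightarrow> (0 < c \<longrightarrow> 0 \<le> a) \<and> (c < 0 \<longrightarrow> a \<le> 0) \<and> (c = 0 \<longrightarrow> a = 0)"

lemma compat_refl[simp]: "compat a a"
  by (auto simp: compat_def)

lemma eps_exists:
  fixes c a :: "'a \<Rightarrow> real"
  assumes "finite I"
  shows "\<exists>\<epsilon>>0. \<forall>i\<in>I. c i \<noteq> 0 \<longrightarrow> \<epsilon> * \<bar>a i\<bar> < \<bar>c i\<bar>"
proof -
  define S where "S = insert 1 ((\<lambda>i. \<bar>c i\<bar> / (\<bar>a i\<bar> + 1)) ` {i\<in>I. c i \<noteq> 0})"
  have finS: "finite S" "S \<noteq> {}" using assms by (auto simp: S_def)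
  have pos: "\<forall>s\<in>S. 0 < s" by (auto simp: S_def)
  define \<epsilon> where "\<epsilon> = Min S"
  have "\<epsilon> > 0" using finS pos by (simp add: \<epsilon>_def)
  moreover have "\<forall>i\<in>I. c i \<noteq> 0 \<longrightarrow> \<epsilon> * \<bar>a i\<bar> < \<bar>c i\<bar>"
  proof (intro ballI impI)
    fix i assume i: "i \<in> I" "c i \<noteq> 0"
    have le: "\<epsilon> \<le> \<bar>c i\<bar> / (\<bar>a i\<bar> + 1)" unfolding \<epsilon>_def using finS i by (auto simp: S_def)
    have "\<epsilon> * \<bar>a i\<bar> \<le> \<bar>c i\<bar> / (\<bar>a i\<bar> + 1) * \<bar>a i\<bar>"
      using mult_right_mono[OF le abs_ge_zero] by simp
    also have "\<dots> < \<bar>c i\<bar>"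
    proof -
      have "\<bar>c i\<bar> * \<bar>a i\<bar> < \<bar>c i\<bar> * (\<bar>a i\<bar> + 1)" using i by simp
      moreover have "0 < \<bar>a i\<bar> + 1" by simp
      ultimately show ?thesis by (simp add: divide_less_eq pos_divide_less_eq)
    qed
    finally show "\<epsilon> * \<bar>a i\<bar> < \<bar>c i\<bar>" .
  qed
  ultimately show ?thesis by blast
qed

lemma dotp_bound:
  assumes "\<forall>t<d. \<bar>v t\<bar> \<le> \<delta>"
  shows "\<bar>dotp d g v\<bar> \<le> \<delta> * (\<Sum>t<d. \<bar>g t\<bar>)"
proof -
  have "\<bar>dotp d g v\<bar> \<le> (\<Sum>t<d. \<bar>g t * v t\<bar>)" unfolding dotp_def by (rule sum_abs)
  also have "\<dots> \<le> (\<Sum>t<d. \<bar>g t\<bar> * \<delta>)"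
    using assms by (intro sum_mono) (auto simp: abs_mult mult_left_mono)
  finally show ?thesis by (simp add: sum_distrib_left mult.commute)
qed

definition cond\<sigma> :: "int \<Rightarrow> real \<Rightarrow> bool" where
  "cond\<sigma> s a \<longleftrightarrow> (s = 1 \<longrightarrow> 0 \<le> a) \<and> (s = -1 \<longrightarrow> a \<le> 0) \<and> (s = 0 \<longrightarrow> a = 0)"

definition sgnI :: "real \<Rightarrow> int" where
  "sgnI c = (if 0 < c then 1 else if c < 0 then -1 else 0)"

lemma compat_cond: "compat a c \<longleftrightarrow> cond\<sigma> (sgnI c) a"
  by (auto simp: compat_def cond\<sigma>_def sgnI_def)

lemma sgnI_range: "sgnI c \<in> {-1, 0, 1}"
  by (auto simp: sgnI_def)

context net
begin

definition mask :: "nat \<Rightarrow> vec \<Rightarrow> nat \<Rightarrow> nat \<Rightarrow> bool" where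
  "mask k y = (\<lambda>i j. 0 < nodeK k i j y)"

definition Pset :: "nat \<Rightarrow> nat \<Rightarrow> vec \<Rightarrow> vec set" where
  "Pset k e y = {z \<in> Rn (n (k - 1)). \<forall>i j. k \<le> i \<longrightarrow> i \<le> e \<longrightarrow> j < n i \<longrightarrow>
      compat (nodeK k i j z) (nodeK k i j y)}"

definition Zs :: "nat \<Rightarrow> nat \<Rightarrow> vec \<Rightarrow> (nat \<times> nat) set" where
  "Zs k e y = {(i, j). k \<le> i \<and> i \<le> e \<and> j < n i \<and> nodeK k i j y = 0}"

definition gr :: "nat \<Rightarrow> vec \<Rightarrow> nat \<times> nat \<Rightarrow> vec" where
  "gr k y = (\<lambda>(i, j). gradL (mask k y) k (i - k) j)"

definition Lk :: "nat \<Rightarrow> nat \<Rightarrow> vec \<Rightarrow> vec set" where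
  "Lk k e y = {v \<in> Rn (n (k - 1)). \<forall>z\<in>Zs k e y. dotp (n (k - 1)) (gr k y z) v = 0}"

lemma Zs_finite: "finite (Zs k e y)"
proof -
  have "Zs k e y \<subseteq> Sigma {k..e} (\<lambda>i. {..<n i})" by (auto simp: Zs_def)
  then show ?thesis by (rule finite_subset) auto
qed

lemma Lk_subspace: "subspace (Lk k e y)"
  unfolding subspace_def Lk_def
  by (auto simp: dotp_add_right dotp_scale_right dotp_zero_right)

lemma gr_Rn: "gr k y z \<in> Rn (n (k - 1))"
  unfolding gr_def by (cases z) (simp only: case_prod_conv gradL_Rn)

lemma self_in_Pset: "y \<in> Rn (n (k - 1)) \<Longrightarrow> y \<in> Pset k e y"
  by (simp add: Pset_def)

lemma Pset_mnode:
  assumes "z \<in> Pset k e y" "k \<le> i" "i \<le> e"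
  shows "nodeK k i j z = mnode (mask k y) k i j z"
proof (rule nodeK_eq_mnode[OF assms(2)], intro allI impI)
  fix i' j' assume i': "k \<le> i'" "i' < i" and j': "j' < n i'"
  have "compat (nodeK k i' j' z) (nodeK k i' j' y)" using assms i' j' by (auto simp: Pset_def)
  then show "(mask k y i' j' \<longrightarrow> 0 \<le> nodeK k i' j' z) \<and> (\<not> mask k y i' j' \<longrightarrow> nodeK k i' j' z \<le> 0)"
    by (auto simp: compat_def mask_def)
qed

lemma mnode_diff': "k \<le> i \<Longrightarrow> j < n i \<Longrightarrow>
  mnode \<mu> k i j z - mnode \<mu> k i j y = dotp (n (k - 1)) (gradL \<mu> k (i - k) j) (z - y)"
  using mnode_diff[of j k "i - k" \<mu> z y] by simp

lemma Pset_diff: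
  assumes "z \<in> Pset k e y" "y \<in> Rn (n (k - 1))" "k \<le> i" "i \<le> e" "j < n i"
  shows "nodeK k i j z - nodeK k i j y = dotp (n (k - 1)) (gr k y (i, j)) (z - y)"
  using Pset_mnode[OF assms(1,3,4)] Pset_mnode[OF self_in_Pset[OF assms(2)] assms(3,4)]
    mnode_diff'[OF assms(3,5)] by (simp add: gr_def)

lemma Pset_diffs_L:
  assumes "p \<in> Pset k e y" "q \<in> Pset k e y" "y \<in> Rn (n (k - 1))"
  shows "p - q \<in> Lk k e y"
proof -
  have "p - q \<in> Rn (n (k - 1))" using assms by (auto simp: Pset_def)
  moreover have "\<forall>z\<in>Zs k e y. dotp (n (k - 1)) (gr k y z) (p - q) = 0"
  proof
    fix z assume z: "z \<in> Zs k e y"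
    then obtain i j where ij: "z = (i, j)" "k \<le> i" "i \<le> e" "j < n i" "nodeK k i j y = 0"
      by (auto simp: Zs_def)
    have "nodeK k i j p = 0" "nodeK k i j q = 0"
      using assms(1,2) ij by (auto simp: Pset_def compat_def)
    then have "dotp (n (k - 1)) (gr k y (i, j)) (p - y) = 0"
              "dotp (n (k - 1)) (gr k y (i, j)) (q - y) = 0"
      using Pset_diff[OF assms(1,3) ij(2-4)] Pset_diff[OF assms(2,3) ij(2-4)] ij(5) by auto
    moreover have "p - q = (p - y) - (q - y)" by simp
    ultimately show "dotp (n (k - 1)) (gr k y z) (p - q) = 0"
      using ij(1) by (metis dotp_diff_right diff_self)
  qed
  ultimately show ?thesis by (simp add: Lk_def)
qed

lemma local_Pset:
  assumes y: "y \<in> Rn (n (k - 1))" and v: "v \<in> Lk k e y"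
    and small: "\<forall>i j. k \<le> i \<longrightarrow> i \<le> e \<longrightarrow> j < n i \<longrightarrow> nodeK k i j y \<noteq> 0 \<longrightarrow>
       \<bar>dotp (n (k - 1)) (gr k y (i, j)) v\<bar> < \<bar>nodeK k i j y\<bar>"
  shows "y + v \<in> Pset k e y"
proof -
  have vR: "v \<in> Rn (n (k - 1))" using v by (simp add: Lk_def)
  have mval: "mnode (mask k y) k i j (y + v) = nodeK k i j y + dotp (n (k - 1)) (gr k y (i, j)) v"
    if "k \<le> i" "i \<le> e" "j < n i" for i j
  proof -
    have "mnode (mask k y) k i j (y + v) - mnode (mask k y) k i j y
        = dotp (n (k - 1)) (gradL (mask k y) k (i - k) j) v"
      using mnode_diff'[OF that(1,3), of "mask k y" "y + v" y] by simp
    moreover have "nodeK k i j y = mnode (mask k y) k i j y"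
      using Pset_mnode[OF self_in_Pset[OF y] that(1,2)] .
    ultimately show ?thesis by (simp add: gr_def)
  qed
  have good: "compat (mnode (mask k y) k i j (y + v)) (nodeK k i j y)"
    if "k \<le> i" "i \<le> e" "j < n i" for i j
  proof (cases "nodeK k i j y = 0")
    case True
    then have "(i, j) \<in> Zs k e y" using that by (simp add: Zs_def)
    then have "dotp (n (k - 1)) (gr k y (i, j)) v = 0" using v by (simp add: Lk_def)
    then show ?thesis using mval[OF that] True by (simp add: compat_def)
  next
    case False
    then have "\<bar>dotp (n (k - 1)) (gr k y (i, j)) v\<bar> < \<bar>nodeK k i j y\<bar>" using small that by blast
    then show ?thesis using mval[OF that] by (auto simp: compat_def abs_if split: if_splits)
  qed
  have eq: "nodeK k i j (y + v) = mnode (mask k y) k i j (y + v)"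
    if "k \<le> i" "i \<le> e" for i j
    by (rule layer_induction[where Good = "\<lambda>i j a. compat a (nodeK k i j y)" and e = e])
       (use good that in \<open>auto simp: compat_def mask_def\<close>)
  show ?thesis unfolding Pset_def using y vR eq good by auto
qed

lemma Lk_span_diffs:
  assumes y: "y \<in> Rn (n (k - 1))"
  shows "span {p - q | p q. p \<in> Pset k e y \<and> q \<in> Pset k e y} = Lk k e y"
proof (rule span_subspace)
  show "{p - q | p q. p \<in> Pset k e y \<and> q \<in> Pset k e y} \<subseteq> Lk k e y"
    using Pset_diffs_L[OF _ _ y] by blast
  show "subspace (Lk k e y)" by (rule Lk_subspace)
  show "Lk k e y \<subseteq> span {p - q | p q. p \<in> Pset k e y \<and> q \<in> Pset k e y}"
  proof
    fix v assume v: "v \<in> Lk k e y"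
    define I where "I = Sigma {k..e} (\<lambda>i. {..<n i})"
    have "finite I" by (simp add: I_def)
    from eps_exists[OF this, of "\<lambda>(i,j). nodeK k i j y" "\<lambda>z. dotp (n (k - 1)) (gr k y z) v"]
    obtain \<epsilon> where \<epsilon>: "\<epsilon> > 0" "\<forall>z\<in>I. (case z of (i, j) \<Rightarrow> nodeK k i j y) \<noteq> 0 \<longrightarrow>
        \<epsilon> * \<bar>dotp (n (k - 1)) (gr k y z) v\<bar> < \<bar>case z of (i, j) \<Rightarrow> nodeK k i j y\<bar>"
      by blast
    have evec: "\<epsilon> *\<^sub>R v \<in> Lk k e y" using v Lk_subspace by (simp add: subspace_scale)
    have "y + \<epsilon> *\<^sub>R v \<in> Pset k e y"
    proof (rule local_Pset[OF y evec], intro allI impI)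
      fix i j assume ij: "k \<le> i" "i \<le> e" "j < n i" "nodeK k i j y \<noteq> 0"
      then have "(i, j) \<in> I" by (simp add: I_def)
      then show "\<bar>dotp (n (k - 1)) (gr k y (i, j)) (\<epsilon> *\<^sub>R v)\<bar> < \<bar>nodeK k i j y\<bar>"
        using \<epsilon> ij by (force simp: dotp_scale_right abs_mult)
    qed
    then have "\<epsilon> *\<^sub>R v \<in> {p - q | p q. p \<in> Pset k e y \<and> q \<in> Pset k e y}"
      using self_in_Pset[OF y] by (metis (mono_tags, lifting) add_diff_cancel_left' mem_Collect_eq)
    then have "(1 / \<epsilon>) *\<^sub>R (\<epsilon> *\<^sub>R v) \<in> span {p - q | p q. p \<in> Pset k e y \<and> q \<in> Pset k e y}"
      by (intro span_scale span_base)
    then show "v \<in> span {p - q | p q. p \<in> Pset k e y \<and> q \<in> Pset k e y}"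
      using \<epsilon>(1) by simp
  qed
qed

lemma adim_Pset: "y \<in> Rn (n (k - 1)) \<Longrightarrow> adim (Pset k e y) = dim (Lk k e y)"
  unfolding adim_def by (subst dim_span[symmetric]) (simp add: Lk_span_diffs)

lemma relint_Pset:
  assumes y: "y \<in> Rn (n (k - 1))"
  shows "y \<in> rel_interior (Pset k e y)"
proof -
  define d where "d = n (k - 1)"
  define A where "A = {y + v | v. v \<in> Lk k e y}"
  have SA: "Pset k e y \<subseteq> A"
  proof
    fix z assume "z \<in> Pset k e y"
    then have "z - y \<in> Lk k e y" using Pset_diffs_L self_in_Pset y by blast
    then show "z \<in> A" unfolding A_def by (intro CollectI exI[of _ "z - y"]) simp
  qed
  have affA: "affine A"
    unfolding affine_def A_def
  proof (intro ballI allI impI)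
    fix x1 x2 u w assume x1: "x1 \<in> {y + v |v. v \<in> Lk k e y}" and x2: "x2 \<in> {y + v |v. v \<in> Lk k e y}"
      and uw: "u + w = (1::real)"
    obtain v1 v2 where v: "x1 = y + v1" "v1 \<in> Lk k e y" "x2 = y + v2" "v2 \<in> Lk k e y"
      using x1 x2 by auto
    have "u *\<^sub>R x1 + w *\<^sub>R x2 = y + (u *\<^sub>R v1 + w *\<^sub>R v2)"
      using uw by (simp add: v algebra_simps) (metis scaleR_add_left scaleR_one add.commute)
    moreover have "u *\<^sub>R v1 + w *\<^sub>R v2 \<in> Lk k e y"
      using v Lk_subspace by (simp add: subspace_add subspace_scale)
    ultimately show "u *\<^sub>R x1 + w *\<^sub>R x2 \<in> {y + v |v. v \<in> Lk k e y}" by blast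
  qed
  have hull: "affine hull (Pset k e y) \<subseteq> A" using hull_minimal[OF SA, of affine] affA by simp
  define I where "I = Sigma {k..e} (\<lambda>i. {..<n i})"
  have "finite I" by (simp add: I_def)
  from eps_exists[OF this, of "\<lambda>(i,j). nodeK k i j y" "\<lambda>z. \<Sum>t<d. \<bar>gr k y z t\<bar>"]
  obtain \<delta> where \<delta>: "\<delta> > 0" "\<forall>z\<in>I. (case z of (i, j) \<Rightarrow> nodeK k i j y) \<noteq> 0 \<longrightarrow>
        \<delta> * \<bar>\<Sum>t<d. \<bar>gr k y z t\<bar>\<bar> < \<bar>case z of (i, j) \<Rightarrow> nodeK k i j y\<bar>"
    by blast
  define T where "T = (\<Inter>t\<in>{..<d}. {z. \<bar>z t - y t\<bar> < \<delta>})"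
  have "open T" unfolding T_def
  proof (rule open_INT, simp, intro ballI)
    fix t
    show "open {z::vec. \<bar>z t - y t\<bar> < \<delta>}"
      by (rule open_Collect_less) (intro continuous_intros continuous_on_product_coordinates)+
  qed
  moreover have "y \<in> T" using \<delta> by (simp add: T_def)
  moreover have "T \<inter> affine hull (Pset k e y) \<subseteq> Pset k e y"
  proof
    fix z assume z: "z \<in> T \<inter> affine hull (Pset k e y)"
    then obtain v where v: "z = y + v" "v \<in> Lk k e y" using hull A_def by auto
    have vb: "\<forall>t<d. \<bar>v t\<bar> \<le> \<delta>" using z v(1) by (auto simp: T_def less_imp_le)
    have "y + v \<in> Pset k e y"
    proof (rule local_Pset[OF y v(2)], intro allI impI)
      fix i j assume ij: "k \<le> i" "i \<le> e" "j < n i" "nodeK k i j y \<noteq> 0"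
      then have "(i, j) \<in> I" by (simp add: I_def)
      then have lt: "\<delta> * (\<Sum>t<d. \<bar>gr k y (i, j) t\<bar>) < \<bar>nodeK k i j y\<bar>"
        using \<delta> ij by force
      have "\<bar>dotp d (gr k y (i, j)) v\<bar> \<le> \<delta> * (\<Sum>t<d. \<bar>gr k y (i, j) t\<bar>)"
        by (rule dotp_bound[OF vb])
      then show "\<bar>dotp (n (k - 1)) (gr k y (i, j)) v\<bar> < \<bar>nodeK k i j y\<bar>"
        using lt d_def by simp
    qed
    then show "z \<in> Pset k e y" using v by simp
  qed
  ultimately show ?thesis using self_in_Pset[OF y] by (auto simp: mem_rel_interior)
qed

end


context net
begin

definition Q :: "nat \<Rightarrow> nat \<Rightarrow> (nat \<Rightarrow> nat \<Rightarrow> int) \<Rightarrow> vec set" where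
  "Q k l \<sigma> = {z \<in> Rn (n (k - 1)). \<forall>i j. k \<le> i \<longrightarrow> i < k + l \<longrightarrow> j < n i \<longrightarrow>
      cond\<sigma> (\<sigma> i j) (nodeK k i j z)}"

definition Rset :: "nat \<Rightarrow> (nat \<Rightarrow> int) \<Rightarrow> vec set" where
  "Rset i \<tau> = {x \<in> Rn (n (i - 1)). \<forall>j<n i. cond\<sigma> (\<tau> j) (affmap n W b i x j)}"

lemma hcells_eq: "hcells n W b i = {R. R \<noteq> {} \<and> (\<exists>\<tau>. (\<forall>j. \<tau> j \<in> {-1, 0, 1}) \<and> R = Rset i \<tau>)}"
  unfolding hcells_def Rset_def cond\<sigma>_def by simp

lemma Q_step: "Q k l \<sigma> \<inter> layers n W b k l -` Rset (k + l) \<tau> = Q k (Suc l) (\<sigma>(k + l := \<tau>))"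
proof -
  have nk: "nodeK k (k + l) j z = affmap n W b (k + l) (layers n W b k l z) j" for j z
    by (simp add: nodeK_def)
  show ?thesis
  proof (intro set_eqI iffI)
    fix z assume z: "z \<in> Q k l \<sigma> \<inter> layers n W b k l -` Rset (k + l) \<tau>"
    show "z \<in> Q k (Suc l) (\<sigma>(k + l := \<tau>))"
      unfolding Q_def
    proof (intro CollectI conjI allI impI)
      show "z \<in> Rn (n (k - 1))" using z by (simp add: Q_def)
      fix i j assume ij: "k \<le> i" "i < k + Suc l" "j < n i"
      show "cond\<sigma> ((\<sigma>(k + l := \<tau>)) i j) (nodeK k i j z)"
      proof (cases "i = k + l")
        case True
        then show ?thesis using z ij nk by (auto simp: Rset_def)
      next
        case False
        then show ?thesis using z ij by (auto simp: Q_def)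
      qed
    qed
  next
    fix z assume z: "z \<in> Q k (Suc l) (\<sigma>(k + l := \<tau>))"
    then have zR: "z \<in> Rn (n (k - 1))" by (simp add: Q_def)
    have "z \<in> Q k l \<sigma>" unfolding Q_def
    proof (intro CollectI conjI allI impI zR)
      fix i j assume ij: "k \<le> i" "i < k + l" "j < n i"
      then show "cond\<sigma> (\<sigma> i j) (nodeK k i j z)" using z by (auto simp: Q_def)
    qed
    moreover have "layers n W b k l z \<in> Rset (k + l) \<tau>"
    proof -
      have zz: "\<forall>i j. k \<le> i \<longrightarrow> i < k + Suc l \<longrightarrow> j < n i \<longrightarrow>
          cond\<sigma> ((\<sigma>(k + l := \<tau>)) i j) (nodeK k i j z)" using z by (simp add: Q_def)
      have "layers n W b k l z \<in> Rn (n (k + l - 1))" using layers_Rn[OF zR] .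
      moreover have "\<forall>j<n (k + l). cond\<sigma> (\<tau> j) (affmap n W b (k + l) (layers n W b k l z) j)"
      proof (intro allI impI)
        fix j assume "j < n (k + l)"
        then have "cond\<sigma> ((\<sigma>(k + l := \<tau>)) (k + l) j) (nodeK k (k + l) j z)"
          using zz[rule_format, of "k + l" j] by simp
        then show "cond\<sigma> (\<tau> j) (affmap n W b (k + l) (layers n W b k l z) j)" using nk by simp
      qed
      ultimately show ?thesis by (simp add: Rset_def)
    qed
    ultimately show "z \<in> Q k l \<sigma> \<inter> layers n W b k l -` Rset (k + l) \<tau>" by simp
  qed
qed

lemma canon_char:
  "canon n W b k l = {Q k l \<sigma> | \<sigma>. (\<forall>i j. \<sigma> i j \<in> {-1, 0, 1}) \<and> Q k l \<sigma> \<noteq> {}}"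
proof (induction l)
  case 0
  have "Q k 0 \<sigma> = Rn (n (k - 1))" for \<sigma> by (auto simp: Q_def)
  moreover have "Rn (n (k - 1)) \<noteq> {}" using Rn_zero by blast
  moreover have "\<forall>i j. (\<lambda>i j. 0::int) i j \<in> {-1, 0, 1}" by simp
  ultimately show ?case by auto
next
  case (Suc l)
  show ?case
  proof (intro set_eqI iffI)
    fix X assume "X \<in> canon n W b k (Suc l)"
    then obtain C R where CR: "X = C \<inter> layers n W b k l -` R" "C \<in> canon n W b k l"
      "R \<in> hcells n W b (k + l)" "C \<inter> layers n W b k l -` R \<noteq> {}"
      by auto
    obtain \<sigma> where \<sigma>: "C = Q k l \<sigma>" "\<forall>i j. \<sigma> i j \<in> {-1, 0, 1}" using CR(2) Suc.IH by auto
    obtain \<tau> where \<tau>: "R = Rset (k + l) \<tau>" "\<forall>j. \<tau> j \<in> {-1, 0, 1}" using CR(3) hcells_eq by auto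
    have "X = Q k (Suc l) (\<sigma>(k + l := \<tau>))" using CR(1) \<sigma> \<tau> Q_step by simp
    moreover have "\<forall>i j. (\<sigma>(k + l := \<tau>)) i j \<in> {-1, 0, 1}" using \<sigma>(2) \<tau>(2) by simp
    ultimately show "X \<in> {Q k (Suc l) \<sigma> | \<sigma>. (\<forall>i j. \<sigma> i j \<in> {-1, 0, 1}) \<and> Q k (Suc l) \<sigma> \<noteq> {}}"
      using CR(1,4) by blast
  next
    fix X assume "X \<in> {Q k (Suc l) \<sigma> | \<sigma>. (\<forall>i j. \<sigma> i j \<in> {-1, 0, 1}) \<and> Q k (Suc l) \<sigma> \<noteq> {}}"
    then obtain \<sigma> where \<sigma>: "X = Q k (Suc l) \<sigma>" "\<forall>i j. \<sigma> i j \<in> {-1, 0, 1}" "X \<noteq> {}" by auto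
    have XQ: "X = Q k l \<sigma> \<inter> layers n W b k l -` Rset (k + l) (\<sigma> (k + l))"
      using Q_step[of k l \<sigma> "\<sigma> (k + l)"] \<sigma>(1) by simp
    have "Q k l \<sigma> \<noteq> {}" using XQ \<sigma>(3) by auto
    then have C: "Q k l \<sigma> \<in> canon n W b k l" using Suc.IH \<sigma>(2) by auto
    have "Rset (k + l) (\<sigma> (k + l)) \<noteq> {}" using XQ \<sigma>(3) by auto
    then have R: "Rset (k + l) (\<sigma> (k + l)) \<in> hcells n W b (k + l)"
      unfolding hcells_eq using \<sigma>(2) by blast
    show "X \<in> canon n W b k (Suc l)"
      using C R XQ \<sigma>(3) by auto
  qed
qed

lemma Pset_Q:
  assumes "k \<le> Suc e"
  shows "Pset k e y = Q k (Suc e - k) (\<lambda>i j. sgnI (nodeK k i j y))"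
  using assms unfolding Pset_def Q_def compat_cond
  by (intro Collect_cong conj_cong refl) (auto simp: less_Suc_eq_le)

lemma Pset_canon:
  assumes "y \<in> Rn (n (k - 1))" "k \<le> Suc e"
  shows "Pset k e y \<in> canon n W b k (Suc e - k)"
proof -
  have "Q k (Suc e - k) (\<lambda>i j. sgnI (nodeK k i j y)) \<noteq> {}"
    using self_in_Pset[OF assms(1)] Pset_Q[OF assms(2)] by auto
  moreover have "\<forall>i j. (\<lambda>i j. sgnI (nodeK k i j y)) i j \<in> {-1, 0, 1}" using sgnI_range by blast
  ultimately show ?thesis unfolding canon_char Pset_Q[OF assms(2)] by blast
qed

lemma Pset_hcell:
  assumes "y \<in> Rn (n (k - 1))"
  shows "Pset k k y \<in> hcells n W b k"
proof -
  have "Pset k k y = Rset k (\<lambda>j. sgnI (affmap n W b k y j))"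
  proof -
    have e: "(\<forall>i j. k \<le> i \<longrightarrow> i \<le> k \<longrightarrow> j < n i \<longrightarrow> P i j) \<longleftrightarrow> (\<forall>j<n k. P k j)" for P
      by (auto dest: le_antisym)
    show ?thesis unfolding Pset_def Rset_def e compat_cond nodeK_self ..
  qed
  moreover have "Pset k k y \<noteq> {}" using self_in_Pset[OF assms] by auto
  ultimately show ?thesis unfolding hcells_eq
    by (intro CollectI conjI exI[of _ "\<lambda>j. sgnI (affmap n W b k y j)"]) (auto simp: sgnI_def)
qed

lemma Pset_layer:
  assumes "p \<in> Pset k k y"
  shows "layer n W b k p = mlayer (mask k y) k p"
proof -
  have c: "\<forall>j<n k. (mask k y k j \<longrightarrow> 0 \<le> nodeK k k j p) \<and> (\<not> mask k y k j \<longrightarrow> nodeK k k j p \<le> 0)"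
    using assms by (auto simp: Pset_def compat_def mask_def)
  have "layers n W b k 1 p = mlayers (mask k y) k 1 p"
  proof (rule layers_eq_mlayers, intro allI impI)
    fix i' j assume i': "k \<le> i'" "i' < k + 1" "j < n i'"
    then have "i' = k" by simp
    then show "(mask k y i' j \<longrightarrow> 0 \<le> nodeK k i' j p) \<and> (\<not> mask k y i' j \<longrightarrow> nodeK k i' j p \<le> 0)"
      using c i'(3) by simp
  qed
  then show ?thesis by simp
qed

end


context net
begin

lemma Zs_split:
  "Zs k e y = {z \<in> Zs k e y. fst z = k} \<union> {z \<in> Zs k e y. fst z \<noteq> k}"
  by auto

lemma Z2_eq:
  "{z \<in> Zs k e y. fst z \<noteq> k} = Zs (Suc k) e (layer n W b k y)"
proof (intro set_eqI iffI)
  fix z assume "z \<in> {z \<in> Zs k e y. fst z \<noteq> k}"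
  then obtain i j where z: "z = (i, j)" "k \<le> i" "i \<le> e" "j < n i" "nodeK k i j y = 0" "i \<noteq> k"
    by (auto simp: Zs_def)
  then have "k < i" by simp
  then show "z \<in> Zs (Suc k) e (layer n W b k y)"
    using z nodeK_peel[of k i j y] by (auto simp: Zs_def)
next
  fix z assume "z \<in> Zs (Suc k) e (layer n W b k y)"
  then obtain i j where z: "z = (i, j)" "Suc k \<le> i" "i \<le> e" "j < n i"
     "nodeK (Suc k) i j (layer n W b k y) = 0"
    by (auto simp: Zs_def)
  then have "k < i" by simp
  then show "z \<in> {z \<in> Zs k e y. fst z \<noteq> k}"
    using z nodeK_peel[of k i j y] by (auto simp: Zs_def)
qed

lemma gr_peel:
  assumes "z \<in> {z \<in> Zs k e y. fst z \<noteq> k}"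
  shows "gr k y z = JT (mask k y) k (gr (Suc k) (layer n W b k y) z)"
proof -
  obtain i j where z: "z = (i, j)" "k < i" using assms by (auto simp: Zs_def)
  have e: "i - k = Suc (i - Suc k)" using z by simp
  have cong: "\<forall>i'\<ge>Suc k. mask k y i' = mask (Suc k) (layer n W b k y) i'"
    by (auto simp: mask_def fun_eq_iff nodeK_peel)
  show ?thesis unfolding z gr_def using gradL_cong[OF cong] by (simp add: e)
qed

lemma Z1_eq: "{z \<in> Zs k e y. fst z = k} = (if k \<le> e then Zs k k y else {})"
  by (auto simp: Zs_def)

lemma generic_rows:
  assumes gen: "generic n W b m" and k: "1 \<le> k" "k \<le> Suc m" and y: "y \<in> Rn (n (k - 1))"
    and S: "S = {j. j < n k \<and> affmap n W b k y j = 0}"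
    and sum0: "(\<Sum>j\<in>S. c j *\<^sub>R row k j) = 0"
  shows "\<forall>j\<in>S. c j = 0"
proof (rule ccontr)
  assume "\<not> (\<forall>j\<in>S. c j = 0)"
  then obtain j0 where j0: "j0 \<in> S" "c j0 \<noteq> 0" by auto
  define d where "d = n (k - 1)"
  define X where "X T = {x \<in> Rn d. \<forall>j\<in>T. affmap n W b k x j = 0}" for T
  have finS: "finite S" using S by simp
  have Ssub: "S \<subseteq> {..<n k}" using S by auto
  have gk: "\<And>T. T \<subseteq> {..<n k} \<Longrightarrow> (card T \<le> d \<longrightarrow> X T \<noteq> {} \<and> adim (X T) = d - card T)
      \<and> (d < card T \<longrightarrow> X T = {})"
    using gen k unfolding generic_def X_def d_def Let_def by auto
  have yX: "y \<in> X S" using y S by (auto simp: X_def d_def)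
  have cS: "card S \<le> d" using gk[OF Ssub] yX by force
  define S' where "S' = S - {j0}"
  have S'sub: "S' \<subseteq> {..<n k}" using Ssub by (auto simp: S'_def)
  have cS': "card S' = card S - 1" using j0 finS by (simp add: S'_def)
  have cS1: "1 \<le> card S" using j0 finS by (metis One_nat_def Suc_leI card_gt_0_iff empty_iff)
  have a1: "adim (X S) = d - card S" using gk[OF Ssub] cS by auto
  have a2: "adim (X S') = d - card S'" using gk[OF S'sub] cS cS' by auto
  have diffs_eq: "{p - q | p q. p \<in> X S \<and> q \<in> X S} = {p - q | p q. p \<in> X S' \<and> q \<in> X S'}"
  proof (intro set_eqI iffI)
    fix w assume "w \<in> {p - q | p q. p \<in> X S \<and> q \<in> X S}"
    then show "w \<in> {p - q | p q. p \<in> X S' \<and> q \<in> X S'}" by (auto simp: X_def S'_def)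
  next
    fix w assume "w \<in> {p - q | p q. p \<in> X S' \<and> q \<in> X S'}"
    then obtain p q where pq: "w = p - q" "p \<in> X S'" "q \<in> X S'" by auto
    have rowz: "dotp d (row k j) (p - q) = 0" if "j \<in> S'" for j
    proof -
      have "j < n k" using that S'sub by auto
      then have "affmap n W b k p j - affmap n W b k q j = dotp d (row k j) (p - q)"
        using affmap_diff by (simp add: d_def)
      then show ?thesis using pq that by (auto simp: X_def)
    qed
    have "dotp d (\<Sum>j\<in>S. c j *\<^sub>R row k j) (p - q) = 0" using sum0 by (simp add: dotp_zero_left)
    then have "(\<Sum>j\<in>S. c j * dotp d (row k j) (p - q)) = 0"
      by (simp add: dotp_sum_left dotp_scale_left)
    moreover have "(\<Sum>j\<in>S. c j * dotp d (row k j) (p - q)) = c j0 * dotp d (row k j0) (p - q)"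
      using rowz j0(1) finS
      by (subst sum.remove[of S j0]) (auto simp: S'_def intro!: sum.neutral)
    ultimately have r0: "dotp d (row k j0) (p - q) = 0" using j0(2) by simp
    have "y + (p - q) \<in> X S"
      unfolding X_def
    proof (intro CollectI conjI ballI)
      show "y + (p - q) \<in> Rn d" using y pq by (auto simp: X_def d_def)
      fix j assume j: "j \<in> S"
      then have jn: "j < n k" using Ssub by auto
      have "affmap n W b k (y + (p - q)) j = affmap n W b k y j + dotp d (row k j) (p - q)"
        using affmap_add[OF jn] by (simp add: d_def)
      also have "\<dots> = 0"
        using j S rowz r0 by (cases "j = j0") (auto simp: S'_def)
      finally show "affmap n W b k (y + (p - q)) j = 0" .
    qed
    then show "w \<in> {p - q | p q. p \<in> X S \<and> q \<in> X S}"
      using pq(1) yX by (metis (mono_tags, lifting) add_diff_cancel_left' mem_Collect_eq)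
  qed
  have "adim (X S) = adim (X S')" unfolding adim_def diffs_eq ..
  then show False using a1 a2 cS' cS cS1 by simp
qed

end


context net
begin

lemma Zs_kk_image: "Zs k k y = (\<lambda>j. (k, j)) ` {j. j < n k \<and> affmap n W b k y j = 0}"
  by (auto simp: Zs_def nodeK_self)

lemma gr_kk: "gr k y (k, j) = row k j"
  by (simp add: gr_def)

lemma IND_step:
  assumes gen: "generic n W b m" and st: "supertransversal n W b m"
    and k: "1 \<le> k" "k \<le> Suc m" and y: "y \<in> Rn (n (k - 1))"
    and IH: "k \<le> m \<Longrightarrow> \<forall>y'\<in>Rn (n k). findep (Zs (Suc k) (Suc m) y') (gr (Suc k) y')"
  shows "findep (Zs k (Suc m) y) (gr k y)"
  unfolding findep_def
proof (intro allI impI)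
  fix c assume sum0: "(\<Sum>z\<in>Zs k (Suc m) y. c z *\<^sub>R gr k y z) = 0"
  define y' where "y' = layer n W b k y"
  define \<mu> where "\<mu> = mask k y"
  define Z1 where "Z1 = {z \<in> Zs k (Suc m) y. fst z = k}"
  define Z2 where "Z2 = {z \<in> Zs k (Suc m) y. fst z \<noteq> k}"
  have fin: "finite Z1" "finite Z2" unfolding Z1_def Z2_def using Zs_finite by auto
  have Z12: "Zs k (Suc m) y = Z1 \<union> Z2" "Z1 \<inter> Z2 = {}" unfolding Z1_def Z2_def by auto
  have Z1e: "Z1 = Zs k k y" unfolding Z1_def using Z1_eq[of k "Suc m" y] k by simp
  have Z2e: "Z2 = Zs (Suc k) (Suc m) y'" unfolding Z2_def y'_def by (rule Z2_eq)
  define u where "u = (\<Sum>z\<in>Z2. c z *\<^sub>R gr (Suc k) y' z)"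
  define S1 where "S1 = (\<Sum>z\<in>Z1. c z *\<^sub>R gr k y z)"
  have JTu: "(\<Sum>z\<in>Z2. c z *\<^sub>R gr k y z) = JT \<mu> k u"
  proof -
    have "(\<Sum>z\<in>Z2. c z *\<^sub>R gr k y z) = (\<Sum>z\<in>Z2. JT \<mu> k (c z *\<^sub>R gr (Suc k) y' z))"
    proof (rule sum.cong[OF refl])
      fix z assume "z \<in> Z2"
      then have "gr k y z = JT \<mu> k (gr (Suc k) y' z)"
        using gr_peel[of z k "Suc m" y] unfolding Z2_def \<mu>_def y'_def by blast
      then show "c z *\<^sub>R gr k y z = JT \<mu> k (c z *\<^sub>R gr (Suc k) y' z)"
        by (simp add: linear_cmul[OF JT_linear])
    qed
    also have "\<dots> = JT \<mu> k u" unfolding u_def by (rule linear_sum[OF JT_linear, symmetric])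
    finally show ?thesis .
  qed
  have S1JT: "S1 + JT \<mu> k u = 0"
    using sum0 unfolding Z12(1) S1_def JTu[symmetric] by (simp add: sum.union_disjoint[OF fin Z12(2)])
  have uR: "u \<in> Rn (n k)" unfolding u_def using gr_Rn[of "Suc k" y'] by (intro Rn_sum Rn_scale) simp
  have y'R: "y' \<in> Rn (n (Suc k - 1))" by (simp add: y'_def layer_Rn)
  have u0: "u = 0"
  proof (cases "k \<le> m")
    case False
    then have "Z2 = {}" unfolding Z2e by (auto simp: Zs_def)
    then show ?thesis by (simp add: u_def)
  next
    case True
    define C1 where "C1 = Pset k k y"
    define D where "D = Pset (Suc k) (Suc m) y'"
    have C1h: "C1 \<in> hcells n W b k" unfolding C1_def by (rule Pset_hcell[OF y])
    have Dc: "D \<in> canon n W b (Suc k) (Suc m - k)"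
      using Pset_canon[OF y'R, of "Suc m"] True unfolding D_def by simp
    have tr: "transverse_on_cell (layer n W b k) C1 D (n k)"
      using st True k C1h Dc unfolding supertransversal_def by auto
    have sp: "span ({layer n W b k p - layer n W b k q | p q. p \<in> C1 \<and> q \<in> C1}
        \<union> {v - w | v w. v \<in> D \<and> w \<in> D}) = Rn (n k)"
      using tr relint_Pset[OF y, of k] relint_Pset[OF y'R, of "Suc m"]
      unfolding transverse_on_cell_def C1_def D_def y'_def by blast
    have orth: "\<forall>w\<in>{layer n W b k p - layer n W b k q | p q. p \<in> C1 \<and> q \<in> C1}
        \<union> {v - w | v w. v \<in> D \<and> w \<in> D}. dotp (n k) w u = 0"
    proof
      fix w assume "w \<in> {layer n W b k p - layer n W b k q | p q. p \<in> C1 \<and> q \<in> C1}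
        \<union> {v - w | v w. v \<in> D \<and> w \<in> D}"
      then consider (a) p q where "w = layer n W b k p - layer n W b k q" "p \<in> C1" "q \<in> C1"
        | (b) v w' where "w = v - w'" "v \<in> D" "w' \<in> D" by blast
      then show "dotp (n k) w u = 0"
      proof cases
        case a
        have pqL: "p - q \<in> Lk k k y" using Pset_diffs_L[OF _ _ y] a unfolding C1_def by blast
        have "w = mlayer \<mu> k p - mlayer \<mu> k q"
          using a Pset_layer unfolding C1_def \<mu>_def by simp
        then have "dotp (n k) w u = dotp (n k) u (mlayer \<mu> k p - mlayer \<mu> k q)"
          by (simp add: dotp_comm[of "n k" _ u])
        also have "\<dots> = dotp (n (k - 1)) (JT \<mu> k u) (p - q)" by (rule mlayer_dotp)
        also have "JT \<mu> k u = - S1" using S1JT by (simp add: eq_neg_iff_add_eq_0 add.commute)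
        also have "dotp (n (k - 1)) (- S1) (p - q) = - (\<Sum>z\<in>Z1. c z * dotp (n (k - 1)) (gr k y z) (p - q))"
          unfolding S1_def using dotp_scale_left[of "n (k - 1)" "-1"]
          by (simp add: dotp_sum_left dotp_scale_left)
        also have "\<dots> = 0"
          using pqL unfolding Z1e Lk_def by simp
        finally show ?thesis .
      next
        case b
        have L: "v - w' \<in> Lk (Suc k) (Suc m) y'" using Pset_diffs_L[OF _ _ y'R] b unfolding D_def by blast
        have "dotp (n k) w u = (\<Sum>z\<in>Z2. c z * dotp (n k) (gr (Suc k) y' z) (v - w'))"
          unfolding u_def b(1) by (simp add: dotp_comm[of "n k" "v - w'"] dotp_sum_left dotp_scale_left)
        also have "\<dots> = 0" using L unfolding Z2e Lk_def by simp
        finally show ?thesis .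
      qed
    qed
    have "dotp (n k) u u = 0"
      by (rule span_orth[OF orth]) (use sp uR in simp)
    then show ?thesis using dotp_self_zero uR by blast
  qed
  have c2: "\<forall>z\<in>Z2. c z = 0"
  proof (cases "k \<le> m")
    case True
    have "findep Z2 (gr (Suc k) y')" using IH[OF True] y'R Z2e by simp
    then show ?thesis using u0 unfolding findep_def u_def by blast
  next
    case False
    then have "Z2 = {}" unfolding Z2e by (auto simp: Zs_def)
    then show ?thesis by simp
  qed
  have S10: "S1 = 0" using S1JT u0 linear_0[OF JT_linear] by simp
  define Sset where "Sset = {j. j < n k \<and> affmap n W b k y j = 0}"
  have inj: "inj_on (\<lambda>j. (k, j)) Sset" by (auto simp: inj_on_def)
  have "(\<Sum>j\<in>Sset. c (k, j) *\<^sub>R row k j) = S1"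
    unfolding S1_def Z1e Zs_kk_image Sset_def[symmetric] sum.reindex[OF inj]
    by (simp add: gr_kk)
  then have "\<forall>j\<in>Sset. c (k, j) = 0"
    using generic_rows[OF gen k y Sset_def, of "\<lambda>j. c (k, j)"] S10 by simp
  then have c1: "\<forall>z\<in>Z1. c z = 0" unfolding Z1e Zs_kk_image Sset_def by auto
  show "\<forall>z\<in>Zs k (Suc m) y. c z = 0" using c1 c2 Z12(1) by blast
qed

lemma IND:
  assumes gen: "generic n W b m" and st: "supertransversal n W b m"
    and k: "1 \<le> k" "k \<le> Suc m"
  shows "\<forall>y\<in>Rn (n (k - 1)). findep (Zs k (Suc m) y) (gr k y)"
proof -
  have "\<forall>k. 1 \<le> k \<longrightarrow> k \<le> Suc m \<longrightarrow> Suc m - k = d \<longrightarrow>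
      (\<forall>y\<in>Rn (n (k - 1)). findep (Zs k (Suc m) y) (gr k y))" for d
  proof (induction d)
    case 0
    show ?case
    proof (intro allI impI ballI)
      fix k y assume k: "1 \<le> k" "k \<le> Suc m" "Suc m - k = 0" and y: "y \<in> Rn (n (k - 1))"
      show "findep (Zs k (Suc m) y) (gr k y)"
        by (rule IND_step[OF gen st k(1,2) y]) (use k in simp)
    qed
  next
    case (Suc d)
    show ?case
    proof (intro allI impI ballI)
      fix k y assume k: "1 \<le> k" "k \<le> Suc m" "Suc m - k = Suc d" and y: "y \<in> Rn (n (k - 1))"
      have IH: "\<forall>y'\<in>Rn (n (Suc k - 1)). findep (Zs (Suc k) (Suc m) y') (gr (Suc k) y')"
        using Suc.IH k by auto
      show "findep (Zs k (Suc m) y) (gr k y)"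
        by (rule IND_step[OF gen st k(1,2) y]) (use IH in simp)
    qed
  qed
  then show ?thesis using k by blast
qed

end


lemma cond_range_pos: "s \<in> {-1, 0, 1} \<Longrightarrow> cond\<sigma> s c \<Longrightarrow> 0 < c \<Longrightarrow> s = 1"
  by (auto simp: cond\<sigma>_def)

lemma cond_range_neg: "s \<in> {-1, 0, 1} \<Longrightarrow> cond\<sigma> s c \<Longrightarrow> c < 0 \<Longrightarrow> s = -1"
  by (auto simp: cond\<sigma>_def)

lemma cond_comp: "s \<in> {-1, 0, 1} \<Longrightarrow> cond\<sigma> s c \<Longrightarrow> compat a c \<Longrightarrow> cond\<sigma> s a"
  by (auto simp: cond\<sigma>_def compat_def)

lemma cond_convex: "cond\<sigma> s a \<Longrightarrow> cond\<sigma> s c \<Longrightarrow> 0 \<le> t \<Longrightarrow> t \<le> 1 \<Longrightarrow> cond\<sigma> s (a + t * (c - a))"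
proof -
  assume h: "cond\<sigma> s a" "cond\<sigma> s c" "0 \<le> t" "t \<le> 1"
  have e: "a + t * (c - a) = (1 - t) * a + t * c" by (simp add: algebra_simps)
  have t1: "0 \<le> 1 - t" using h by simp
  show ?thesis using h t1 unfolding e cond\<sigma>_def
    by (auto intro!: add_nonneg_nonneg add_nonpos_nonpos mult_nonneg_nonneg mult_nonneg_nonpos)
qed

context net
begin

definition smask :: "(nat \<Rightarrow> nat \<Rightarrow> int) \<Rightarrow> nat \<Rightarrow> nat \<Rightarrow> bool" where
  "smask \<sigma> = (\<lambda>i j. \<sigma> i j = 1)"

lemma Q_mnode:
  assumes r: "\<forall>i j. \<sigma> i j \<in> {-1, 0, 1}" and p: "p \<in> Q k l \<sigma>" and i: "k \<le> i" "i < k + l"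
  shows "nodeK k i j p = mnode (smask \<sigma>) k i j p"
proof (rule nodeK_eq_mnode[OF i(1)], intro allI impI)
  fix i' j' assume i': "k \<le> i'" "i' < i" "j' < n i'"
  have "cond\<sigma> (\<sigma> i' j') (nodeK k i' j' p)" using p i i' by (auto simp: Q_def)
  then show "(smask \<sigma> i' j' \<longrightarrow> 0 \<le> nodeK k i' j' p) \<and> (\<not> smask \<sigma> i' j' \<longrightarrow> nodeK k i' j' p \<le> 0)"
    using r[rule_format, of i' j'] by (auto simp: smask_def cond\<sigma>_def)
qed

lemma Q_diff:
  assumes r: "\<forall>i j. \<sigma> i j \<in> {-1, 0, 1}" and p: "p \<in> Q k l \<sigma>" and q: "q \<in> Q k l \<sigma>"
    and i: "k \<le> i" "i < k + l" "j < n i"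
  shows "nodeK k i j p - nodeK k i j q = dotp (n (k - 1)) (gradL (smask \<sigma>) k (i - k) j) (p - q)"
  using Q_mnode[OF r p i(1,2)] Q_mnode[OF r q i(1,2)] mnode_diff'[OF i(1,3)] by simp

lemma Q_convex:
  assumes r: "\<forall>i j. \<sigma> i j \<in> {-1, 0, 1}" and x: "x \<in> Q k l \<sigma>" and y: "y \<in> Q k l \<sigma>"
    and t: "0 \<le> t" "t \<le> 1"
  shows "x + t *\<^sub>R (y - x) \<in> Q k l \<sigma>"
proof -
  define w where "w = x + t *\<^sub>R (y - x)"
  have mw: "mnode (smask \<sigma>) k i j w = nodeK k i j x + t * (nodeK k i j y - nodeK k i j x)"
    if i: "k \<le> i" "i < k + l" "j < n i" for i j
  proof -
    have "mnode (smask \<sigma>) k i j w - mnode (smask \<sigma>) k i j x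
        = dotp (n (k - 1)) (gradL (smask \<sigma>) k (i - k) j) (t *\<^sub>R (y - x))"
      using mnode_diff'[OF i(1,3), of "smask \<sigma>" w x] by (simp add: w_def)
    also have "\<dots> = t * (nodeK k i j y - nodeK k i j x)"
      using Q_diff[OF r y x i] by (simp add: dotp_scale_right)
    finally show ?thesis using Q_mnode[OF r x i(1,2)] by simp
  qed
  have eq: "nodeK k i j w = mnode (smask \<sigma>) k i j w" if "k \<le> i" "i \<le> k + l - 1" "1 \<le> l" for i j
  proof (rule layer_induction[where Good = "\<lambda>i j a. cond\<sigma> (\<sigma> i j) a" and e = "k + l - 1"])
    show "\<forall>i j. k \<le> i \<longrightarrow> i \<le> k + l - 1 \<longrightarrow> j < n i \<longrightarrow> cond\<sigma> (\<sigma> i j) (mnode (smask \<sigma>) k i j w)"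
    proof (intro allI impI)
      fix i j assume i: "k \<le> i" "i \<le> k + l - 1" "j < n i"
      then have i': "i < k + l" using that(3) by simp
      have "cond\<sigma> (\<sigma> i j) (nodeK k i j x)" "cond\<sigma> (\<sigma> i j) (nodeK k i j y)"
        using x y i i' by (auto simp: Q_def)
      then show "cond\<sigma> (\<sigma> i j) (mnode (smask \<sigma>) k i j w)"
        using mw[OF i(1) i' i(3)] cond_convex t by simp
    qed
    show "\<forall>i j a. cond\<sigma> (\<sigma> i j) a \<longrightarrow> (smask \<sigma> i j \<longrightarrow> 0 \<le> a) \<and> (\<not> smask \<sigma> i j \<longrightarrow> a \<le> 0)"
      using r by (force simp: smask_def cond\<sigma>_def)
  qed (use that in auto)
  have wR: "w \<in> Rn (n (k - 1))" using x y by (auto simp: Q_def w_def)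
  have "\<forall>i j. k \<le> i \<longrightarrow> i < k + l \<longrightarrow> j < n i \<longrightarrow> cond\<sigma> (\<sigma> i j) (nodeK k i j w)"
  proof (intro allI impI)
    fix i j assume i: "k \<le> i" "i < k + l" "j < n i"
    have "cond\<sigma> (\<sigma> i j) (nodeK k i j x)" "cond\<sigma> (\<sigma> i j) (nodeK k i j y)"
      using x y i by (auto simp: Q_def)
    then show "cond\<sigma> (\<sigma> i j) (nodeK k i j w)"
      using eq[of i j] i mw[OF i] cond_convex t by simp
  qed
  then show ?thesis using wR by (simp add: Q_def w_def)
qed

lemma Q_line:
  assumes r: "\<forall>i j. \<sigma> i j \<in> {-1, 0, 1}" and w: "w \<in> Q k l \<sigma>" and x: "x \<in> Q k l \<sigma>"
    and y: "y \<in> Q k l \<sigma>" and wx: "w - x = t *\<^sub>R (y - x)"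
    and i: "k \<le> i" "i < k + l" "j < n i"
  shows "nodeK k i j w = nodeK k i j x + t * (nodeK k i j y - nodeK k i j x)"
  using Q_diff[OF r w x i] Q_diff[OF r y x i] unfolding wx by (simp add: dotp_scale_right)

lemma relint_zero:
  assumes r: "\<forall>i j. \<sigma> i j \<in> {-1, 0, 1}" and x: "x \<in> rel_interior (Q k l \<sigma>)"
    and y: "y \<in> Q k l \<sigma>" and i: "k \<le> i" "i < k + l" "j < n i" and z: "nodeK k i j x = 0"
  shows "nodeK k i j y = 0"
proof -
  have xC: "x \<in> Q k l \<sigma>" using x rel_interior_subset by blast
  obtain T where T: "open T" "x \<in> T" "T \<inter> affine hull (Q k l \<sigma>) \<subseteq> Q k l \<sigma>"
    using x by (auto simp: mem_rel_interior)
  define f where "f s = x + s *\<^sub>R (x - y)" for s :: real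
  have "continuous_on UNIV f"
    unfolding f_def by (rule continuous_on_coordinatewise_then_product) (simp add: continuous_intros)
  then have "open (f -` T)" using T(1) open_vimage by blast
  moreover have "0 \<in> f -` T" using T(2) by (simp add: f_def)
  ultimately obtain e where e: "e > 0" "ball 0 e \<subseteq> f -` T" using open_contains_ball_eq by blast
  define s where "s = e / 2"
  have s: "s > 0" "s \<in> ball 0 e" using e by (auto simp: s_def)
  then have fT: "f s \<in> T" using e(2) by blast
  have "f s = (1 + s) *\<^sub>R x + (- s) *\<^sub>R y" by (simp add: f_def algebra_simps)
  moreover have "(1 + s) *\<^sub>R x + (- s) *\<^sub>R y \<in> affine hull (Q k l \<sigma>)"
    by (rule mem_affine[OF affine_affine_hull hull_inc[OF xC] hull_inc[OF y]]) simp
  ultimately have wC: "f s \<in> Q k l \<sigma>" using fT T(3) by auto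
  have "f s - x = (- s) *\<^sub>R (y - x)" by (simp add: f_def algebra_simps)
  then have nw: "nodeK k i j (f s) = - s * nodeK k i j y"
    using Q_line[OF r wC xC y _ i, of "- s"] z by simp
  have c1: "cond\<sigma> (\<sigma> i j) (nodeK k i j (f s))" "cond\<sigma> (\<sigma> i j) (nodeK k i j y)"
    using wC y i by (auto simp: Q_def)
  have "\<sigma> i j \<in> {-1, 0, 1}" using r by blast
  then show ?thesis using c1 nw s(1) unfolding cond\<sigma>_def
    by (auto simp: mult_le_0_iff zero_le_mult_iff)
qed

end


context net
begin

lemma main:
  assumes gen: "generic n W b m" and st: "supertransversal n W b m"
    and C: "C \<in> canon n W b 1 (Suc m)"
  shows "card {(i, j). i \<in> {1..Suc m} \<and> j < n i \<and> sign_seq n W b C i j = 0} = n 0 - adim C"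
proof -
  obtain \<sigma> where \<sigma>: "C = Q 1 (Suc m) \<sigma>" "\<forall>i j. \<sigma> i j \<in> {-1, 0, 1}" "C \<noteq> {}"
    using C unfolding canon_char by blast
  have r: "\<forall>i j. \<sigma> i j \<in> {-1, 0, 1}" using \<sigma>(2) .
  have CR: "C \<subseteq> Rn (n 0)" using \<sigma>(1) by (auto simp: Q_def)
  have Ccond: "cond\<sigma> (\<sigma> i j) (nodeK 1 i j x)" if "x \<in> C" "1 \<le> i" "i \<le> Suc m" "j < n i" for x i j
    using that \<sigma>(1) by (auto simp: Q_def)
  have PC: "Pset 1 (Suc m) x \<subseteq> C" if x: "x \<in> C" for x
  proof
    fix z assume z: "z \<in> Pset 1 (Suc m) x"
    have "\<forall>i j. 1 \<le> i \<longrightarrow> i < 1 + Suc m \<longrightarrow> j < n i \<longrightarrow> cond\<sigma> (\<sigma> i j) (nodeK 1 i j z)"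
    proof (intro allI impI)
      fix i j assume i: "1 \<le> i" "i < 1 + Suc m" "j < n i"
      have "compat (nodeK 1 i j z) (nodeK 1 i j x)" using z i by (auto simp: Pset_def)
      then show "cond\<sigma> (\<sigma> i j) (nodeK 1 i j z)"
        using cond_comp[OF r[rule_format] Ccond[OF x]] i by simp
    qed
    then show "z \<in> C" using z \<sigma>(1) by (simp add: Q_def Pset_def)
  qed
  have sgnok: "compat (nodeK 1 i j y) (nodeK 1 i j x)"
    if "x \<in> C" "y \<in> C" "1 \<le> i" "i \<le> Suc m" "j < n i" "nodeK 1 i j x \<noteq> 0" for x y i j
  proof (cases "0 < nodeK 1 i j x")
    case True
    then have "\<sigma> i j = 1" using cond_range_pos[OF r[rule_format] Ccond[OF that(1,3,4,5)]] by simp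
    then show ?thesis using Ccond[OF that(2-5)] True by (simp add: cond\<sigma>_def compat_def)
  next
    case False
    then have neg: "nodeK 1 i j x < 0" using that(6) by simp
    then have "\<sigma> i j = -1" using cond_range_neg[OF r[rule_format] Ccond[OF that(1,3,4,5)]] by simp
    then show ?thesis using Ccond[OF that(2-5)] neg by (simp add: cond\<sigma>_def compat_def)
  qed
  have CP: "C \<subseteq> Pset 1 (Suc m) x"
    if x: "x \<in> C" and zeros: "\<And>y i j. y \<in> C \<Longrightarrow> 1 \<le> i \<Longrightarrow> i \<le> Suc m \<Longrightarrow> j < n i \<Longrightarrow>
        nodeK 1 i j x = 0 \<Longrightarrow> nodeK 1 i j y = 0" for x
  proof
    fix y assume y: "y \<in> C"
    have "compat (nodeK 1 i j y) (nodeK 1 i j x)" if "1 \<le> i" "i \<le> Suc m" "j < n i" for i j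
    proof (cases "nodeK 1 i j x = 0")
      case True
      then show ?thesis using zeros[OF y that] by (simp add: compat_def)
    next
      case False
      then show ?thesis using sgnok[OF x y that] by simp
    qed
    then show "y \<in> Pset 1 (Suc m) x" using y CR by (auto simp: Pset_def)
  qed
  obtain x0 where x0: "x0 \<in> C" "\<forall>y. y \<in> C \<longrightarrow> card (Zs 1 (Suc m) x0) \<le> card (Zs 1 (Suc m) y)"
    using ex_has_least_nat[of "\<lambda>x. x \<in> C" _ "\<lambda>x. card (Zs 1 (Suc m) x)"] \<sigma>(3) by blast
  have zeros0: "nodeK 1 i j y = 0"
    if y: "y \<in> C" and i: "1 \<le> i" "i \<le> Suc m" "j < n i" and z: "nodeK 1 i j x0 = 0" for y i j
  proof (rule ccontr)
    assume ny: "nodeK 1 i j y \<noteq> 0"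
    define I where "I = Sigma {1..Suc m} (\<lambda>i. {..<n i})"
    have "finite I" by (simp add: I_def)
    from eps_exists[OF this, of "\<lambda>(i,j). nodeK 1 i j x0" "\<lambda>(i,j). nodeK 1 i j y - nodeK 1 i j x0"]
    obtain t0 where t0: "t0 > 0" "\<forall>z\<in>I. (case z of (i, j) \<Rightarrow> nodeK 1 i j x0) \<noteq> 0 \<longrightarrow>
        t0 * \<bar>case z of (i, j) \<Rightarrow> nodeK 1 i j y - nodeK 1 i j x0\<bar> < \<bar>case z of (i, j) \<Rightarrow> nodeK 1 i j x0\<bar>"
      by blast
    define t where "t = min t0 1"
    have t: "0 < t" "t \<le> 1" "t \<le> t0" using t0 by (auto simp: t_def)
    define w where "w = x0 + t *\<^sub>R (y - x0)"
    have wC: "w \<in> C" using Q_convex[OF r, of x0 1 "Suc m" y t] x0(1) y t \<sigma>(1) by (simp add: w_def)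
    have nw: "nodeK 1 i' j' w = nodeK 1 i' j' x0 + t * (nodeK 1 i' j' y - nodeK 1 i' j' x0)"
      if "1 \<le> i'" "i' \<le> Suc m" "j' < n i'" for i' j'
      using Q_line[OF r, of w 1 "Suc m" x0 y t i' j'] wC x0(1) y that \<sigma>(1) by (simp add: w_def)
    have sub: "Zs 1 (Suc m) w \<subseteq> Zs 1 (Suc m) x0 - {(i, j)}"
    proof
      fix p assume p: "p \<in> Zs 1 (Suc m) w"
      then obtain i' j' where pp: "p = (i', j')" "1 \<le> i'" "i' \<le> Suc m" "j' < n i'" "nodeK 1 i' j' w = 0"
        by (auto simp: Zs_def)
      have "nodeK 1 i' j' x0 = 0"
      proof (rule ccontr)
        assume nz: "nodeK 1 i' j' x0 \<noteq> 0"
        have "(i', j') \<in> I" using pp by (simp add: I_def)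
        then have lt: "t0 * \<bar>nodeK 1 i' j' y - nodeK 1 i' j' x0\<bar> < \<bar>nodeK 1 i' j' x0\<bar>"
          using t0(2) nz by auto
        have "t * \<bar>nodeK 1 i' j' y - nodeK 1 i' j' x0\<bar> \<le> t0 * \<bar>nodeK 1 i' j' y - nodeK 1 i' j' x0\<bar>"
          using t by (simp add: mult_right_mono)
        then have "\<bar>t * (nodeK 1 i' j' y - nodeK 1 i' j' x0)\<bar> < \<bar>nodeK 1 i' j' x0\<bar>"
          using lt t(1) by (simp add: abs_mult)
        then show False using nw[OF pp(2-4)] pp(5) by simp
      qed
      moreover have "p \<noteq> (i, j)"
      proof
        assume "p = (i, j)"
        then have "nodeK 1 i j w = 0" using pp by simp
        then show False using nw[OF i] z ny t(1) by simp
      qed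
      ultimately show "p \<in> Zs 1 (Suc m) x0 - {(i, j)}" using pp by (auto simp: Zs_def)
    qed
    have "(i, j) \<in> Zs 1 (Suc m) x0" using i z by (simp add: Zs_def)
    then have "card (Zs 1 (Suc m) x0 - {(i, j)}) < card (Zs 1 (Suc m) x0)"
      by (rule card_Diff1_less[OF Zs_finite])
    moreover have "card (Zs 1 (Suc m) w) \<le> card (Zs 1 (Suc m) x0 - {(i, j)})"
      using sub Zs_finite by (simp add: card_mono)
    ultimately show False using x0(2) wC by fastforce
  qed
  have Cx0: "C = Pset 1 (Suc m) x0"
    using PC[OF x0(1)] CP[OF x0(1) zeros0] by blast
  have x0R: "x0 \<in> Rn (n (1 - 1))" using x0(1) CR by auto
  have "x0 \<in> rel_interior C" using relint_Pset[OF x0R] Cx0 by simp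
  then have "\<exists>x. x \<in> rel_interior C" by blast
  define x' where "x' = (SOME x. x \<in> rel_interior C)"
  have x'ri: "x' \<in> rel_interior C" unfolding x'_def using someI_ex[OF \<open>\<exists>x. x \<in> rel_interior C\<close>] .
  then have x'C: "x' \<in> C" using rel_interior_subset by blast
  have x'R: "x' \<in> Rn (n (1 - 1))" using x'C CR by auto
  have zeros': "nodeK 1 i j y = 0"
    if "y \<in> C" "1 \<le> i" "i \<le> Suc m" "j < n i" "nodeK 1 i j x' = 0" for y i j
    using relint_zero[OF r, of x' 1 "Suc m" y i j] x'ri that \<sigma>(1) by simp
  have Cx': "C = Pset 1 (Suc m) x'"
    using PC[OF x'C] CP[OF x'C zeros'] by blast
  have set_eq: "{(i, j). i \<in> {1..Suc m} \<and> j < n i \<and> sign_seq n W b C i j = 0} = Zs 1 (Suc m) x'"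
    unfolding sign_seq_def x'_def[symmetric] Zs_def node_nodeK by (auto simp: sgn_eq_0_iff)
  have fd: "findep (Zs 1 (Suc m) x') (gr 1 x')"
    using IND[OF gen st, of 1] x'R by simp
  have kd: "dim {v \<in> Rn (n 0). \<forall>z\<in>Zs 1 (Suc m) x'. dotp (n 0) (gr 1 x' z) v = 0}
      + card (Zs 1 (Suc m) x') = n 0"
    by (rule kernel_dim_fam[OF Zs_finite fd]) (use gr_Rn[of 1 x'] in simp)
  have "adim C = dim (Lk 1 (Suc m) x')" using adim_Pset[OF x'R] Cx' by simp
  also have "\<dots> = dim {v \<in> Rn (n 0). \<forall>z\<in>Zs 1 (Suc m) x'. dotp (n 0) (gr 1 x' z) v = 0}"
    by (simp add: Lk_def)
  finally show ?thesis using set_eq kd by simp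
qed

end

theorem lemma16:
  fixes m :: nat and n :: "nat \<Rightarrow> nat" and W :: "nat \<Rightarrow> nat \<Rightarrow> nat \<Rightarrow> real"
    and b :: "nat \<Rightarrow> nat \<Rightarrow> real" and C :: "vec set" and k :: nat
  assumes "n (Suc m) = 1"
    and "\<forall>i \<le> m. 0 < n i"
    and "generic n W b m"
    and "supertransversal n W b m"
    and "C \<in> canon n W b 1 (Suc m)"
    and "adim C = k"
  shows "card {(i, j). i \<in> {1..Suc m} \<and> j < n i \<and> sign_seq n W b C i j = 0} = n 0 - k"
  using net.main[OF assms(3,4,5)] assms(6) by simp


end
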